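(* Let $f:\mathbb{R}^n\to(-\infty,+\infty]$ be a proper closed function with $S=\arg\min f$ nonempty, let $\bar x\in S$, and let $\mathcal{M}$ be a $C^1$-smooth embedded submanifold containing $\bar x$ (with induced metric). Suppose $f$ is $C^1$-partly smooth and prox-regular around $\bar x$ relative to $\mathcal{M}$ with $0\in\operatorname{ri}\partial f(\bar x)$, and $f$ is subdifferentially continuous at $\bar x$. Then the following are equivalent: (i) there exist $\epsilon,\mu>0$ such that $\mu\,\operatorname{dist}(x,S)\le\operatorname{dist}(0,\partial f(x))$ for all $x\in B_\epsilon(\bar x)$; (ii) there exist $\epsilon,\mu>0$ such that $\mu\,\operatorname{dist}(x,S\cap\mathcal{M})\le\|\nabla_{\mathcal{M}}f(x)\|$ for all $x\in B_\epsilon(\bar x)\cap\mathcal{M}$.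
   Context: $\hat\partial f$ is the Fréchet and $\partial f$ the limiting subdifferential; $\operatorname{dist}(0,\emptyset)=+\infty$. Partial smoothness: $f$ is partly smooth at a point $x\in\mathcal M$ relative to a $C^p$ manifold $\mathcal{M}$ (for all subgradients) if: (Regularity) $\hat\partial f(z)=\partial f(z)\neq\varnothing$ for all $z\in\mathcal{M}$ near $x$; (Restricted smoothness) $f|_{\mathcal{M}}$ is $C^p$-smooth around $x$; (Sharpness) $\operatorname{par}\partial f(x)$ (subspace parallel to the affine hull) equals $N_x\mathcal{M}$; (Inner semicontinuity) for every $y\in\partial f(x)$ and every sequence $x_r\to x$ in $\mathcal{M}$ there exist $y_r\in\partial f(x_r)$ with $y_r\to y$. "Around $\bar x$ relative to $\mathcal M$" means at every point of $\mathcal M$ near $\bar x$ (with $p=1$). Prox-regularity of $f$ at $x$ for $\bar v\in\hat\partial f(x)$: there are $\epsilon>0,\rho\ge0$ with $f(x'')\ge f(x')+\langle v,x''-x'\rangle-\frac\rho2\|x''-x'\|^2$ for all $x',x''\in B_\epsilon(x)$, $v\in\hat\partial f(x')$ with $\|v-\bar v\|<\epsilon$ and $f(x')<f(x)+\epsilon$; "prox-regular around $\bar x$ relative to $\mathcal M$" is taken to mean prox-regular at every point of $\mathcal M$ near $\bar x$ for each of its subgradients. Subdifferential continuity at $\bar x$: $x_k\to\bar x$, $v_k\in\partial f(x_k)$, $v_k\to\bar v\in\partial f(\bar x)$ imply $f(x_k)\to f(\bar x)$. $\nabla_{\mathcal M}f$ is the Riemannian gradient of $f|_{\mathcal M}$.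 *)

theory Defs
  imports "HOL-Analysis.Analysis"
begin

definition proper_fun :: "('a \<Rightarrow> ereal) \<Rightarrow> bool" where
  "proper_fun f \<longleftrightarrow> (\<exists>x. f x \<noteq> \<infinity>) \<and> (\<forall>x. f x \<noteq> -\<infinity>)"

text \<open>Closed = lower semicontinuous = closed epigraph.\<close>
definition closed_fun :: "('a::topological_space \<Rightarrow> ereal) \<Rightarrow> bool" where
  "closed_fun f \<longleftrightarrow> closed {(x, r::real). f x \<le> ereal r}"

definition argmin_set :: "('a \<Rightarrow> ereal) \<Rightarrow> 'a set" where
  "argmin_set f = {x. \<forall>y. f x \<le> f y}"

definition frechet_subdiff :: "('a::real_inner \<Rightarrow> ereal) \<Rightarrow> 'a \<Rightarrow> 'a set" where
  "frechet_subdiff f x = {v. \<bar>f x\<bar> \<noteq> \<infinity> \<and>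
     (\<forall>e>0. \<exists>d>0. \<forall>y. dist y x < d \<longrightarrow>
        ereal (real_of_ereal (f x) + inner v (y - x) - e * norm (y - x)) \<le> f y)}"

definition limiting_subdiff :: "('a::real_inner \<Rightarrow> ereal) \<Rightarrow> 'a \<Rightarrow> 'a set" where
  "limiting_subdiff f x = {v. \<bar>f x\<bar> \<noteq> \<infinity> \<and>
     (\<exists>X V. X \<longlonglongrightarrow> x \<and> (\<lambda>k. f (X k)) \<longlonglongrightarrow> f x \<and>
            (\<forall>k. V k \<in> frechet_subdiff f (X k)) \<and> V \<longlonglongrightarrow> v)}"

text \<open>dist(0, A) with dist(0, {}) = +infinity.\<close>
definition dist0 :: "'a::real_normed_vector set \<Rightarrow> ereal" where
  "dist0 A = (if A = {} then \<infinity> else ereal (infdist 0 A))"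

definition par :: "'a::real_vector set \<Rightarrow> 'a set" where
  "par A = {u - v | u v. u \<in> affine hull A \<and> v \<in> affine hull A}"

definition C1_within :: "'a::real_normed_vector set \<Rightarrow> 'a set \<Rightarrow> ('a \<Rightarrow> 'b::real_normed_vector) \<Rightarrow> bool" where
  "C1_within E W g \<longleftrightarrow> (\<exists>g'. (\<forall>w\<in>W. (g has_derivative g' w) (at w within E)) \<and>
                           (\<forall>u\<in>E. continuous_on W (\<lambda>z. g' z u)))"

text \<open>Local C^1 parametrization (immersion + homeomorphism onto M \<inter> U) of M,
  defined on a relatively open subset W of a linear subspace E (so E plays the role of R^d).\<close>
definition local_param :: "'a::euclidean_space set \<Rightarrow> 'a set \<Rightarrow> 'a set \<Rightarrow> 'a set \<Rightarrow> ('a \<Rightarrow> 'a) \<Rightarrow> bool" where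
  "local_param M E U W \<phi> \<longleftrightarrow> subspace E \<and> open U \<and> openin (top_of_set E) W \<and>
     \<phi> ` W = M \<inter> U \<and> inj_on \<phi> W \<and> continuous_on (M \<inter> U) (inv_into W \<phi>) \<and>
     (\<exists>\<phi>'. (\<forall>w\<in>W. (\<phi> has_derivative \<phi>' w) (at w within E) \<and> inj_on (\<phi>' w) E) \<and>
           (\<forall>u\<in>E. continuous_on W (\<lambda>z. \<phi>' z u)))"

definition C1_submanifold :: "'a::euclidean_space set \<Rightarrow> bool" where
  "C1_submanifold M \<longleftrightarrow> (\<forall>p\<in>M. \<exists>E U W \<phi>. p \<in> U \<and> local_param M E U W \<phi>)"

definition restricted_C1 :: "('a::euclidean_space \<Rightarrow> ereal) \<Rightarrow> 'a set \<Rightarrow> 'a \<Rightarrow> bool" where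
  "restricted_C1 f M x \<longleftrightarrow> (\<exists>r>0. \<forall>p\<in>M \<inter> ball x r. \<exists>E U W \<phi>. p \<in> U \<and> local_param M E U W \<phi> \<and>
       (\<forall>w\<in>W. \<bar>f (\<phi> w)\<bar> \<noteq> \<infinity>) \<and> C1_within E W (\<lambda>w. real_of_ereal (f (\<phi> w))))"

definition curve_in :: "'a::euclidean_space set \<Rightarrow> 'a \<Rightarrow> (real \<Rightarrow> 'a) \<Rightarrow> 'a \<Rightarrow> bool" where
  "curve_in M x \<gamma> u \<longleftrightarrow> \<gamma> 0 = x \<and> (\<exists>e>0. \<forall>t. \<bar>t\<bar> < e \<longrightarrow> \<gamma> t \<in> M) \<and>
      (\<gamma> has_vector_derivative u) (at 0)"

definition tangent_space :: "'a::euclidean_space set \<Rightarrow> 'a \<Rightarrow> 'a set" where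
  "tangent_space M x = {u. \<exists>\<gamma>. curve_in M x \<gamma> u}"

definition normal_space :: "'a::euclidean_space set \<Rightarrow> 'a \<Rightarrow> 'a set" where
  "normal_space M x = {w. \<forall>u\<in>tangent_space M x. inner w u = 0}"

definition riem_grad :: "('a::euclidean_space \<Rightarrow> ereal) \<Rightarrow> 'a set \<Rightarrow> 'a \<Rightarrow> 'a" where
  "riem_grad f M x = (THE v. v \<in> tangent_space M x \<and>
     (\<forall>\<gamma> u. curve_in M x \<gamma> u \<longrightarrow>
        ((\<lambda>t. real_of_ereal (f (\<gamma> t))) has_real_derivative (inner v u)) (at 0)))"

definition partly_smooth_at :: "('a::euclidean_space \<Rightarrow> ereal) \<Rightarrow> 'a set \<Rightarrow> 'a \<Rightarrow> bool" where
  "partly_smooth_at f M x \<longleftrightarrow> x \<in> M \<and>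
     (\<exists>r>0. \<forall>z\<in>M \<inter> ball x r. frechet_subdiff f z = limiting_subdiff f z \<and> limiting_subdiff f z \<noteq> {}) \<and>
     restricted_C1 f M x \<and>
     par (limiting_subdiff f x) = normal_space M x \<and>
     (\<forall>y\<in>limiting_subdiff f x. \<forall>X. (\<forall>k. X k \<in> M) \<and> X \<longlonglongrightarrow> x \<longrightarrow>
        (\<exists>Y. (\<forall>k. Y k \<in> limiting_subdiff f (X k)) \<and> Y \<longlonglongrightarrow> y))"

definition partly_smooth_around :: "('a::euclidean_space \<Rightarrow> ereal) \<Rightarrow> 'a set \<Rightarrow> 'a \<Rightarrow> bool" where
  "partly_smooth_around f M x \<longleftrightarrow> (\<exists>r>0. \<forall>z\<in>M \<inter> ball x r. partly_smooth_at f M z)"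

definition prox_regular_at :: "('a::real_inner \<Rightarrow> ereal) \<Rightarrow> 'a \<Rightarrow> 'a \<Rightarrow> bool" where
  "prox_regular_at f x vb \<longleftrightarrow> (\<exists>e>0. \<exists>\<rho>\<ge>0. \<forall>x' x'' v.
      x' \<in> ball x e \<and> x'' \<in> ball x e \<and> v \<in> frechet_subdiff f x' \<and> norm (v - vb) < e \<and>
      f x' < f x + ereal e \<longrightarrow>
      ereal (real_of_ereal (f x') + inner v (x'' - x') - \<rho> / 2 * (norm (x'' - x'))\<^sup>2) \<le> f x'')"

definition prox_regular_around :: "('a::euclidean_space \<Rightarrow> ereal) \<Rightarrow> 'a set \<Rightarrow> 'a \<Rightarrow> bool" where
  "prox_regular_around f M x \<longleftrightarrow>
     (\<exists>r>0. \<forall>z\<in>M \<inter> ball x r. \<forall>v\<in>limiting_subdiff f z. prox_regular_at f z v)"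

definition subdiff_continuous_at :: "('a::real_inner \<Rightarrow> ereal) \<Rightarrow> 'a \<Rightarrow> bool" where
  "subdiff_continuous_at f x \<longleftrightarrow> (\<forall>X V v. X \<longlonglongrightarrow> x \<and> (\<forall>k. V k \<in> limiting_subdiff f (X k)) \<and>
      V \<longlonglongrightarrow> v \<and> v \<in> limiting_subdiff f x \<longrightarrow> (\<lambda>k. f (X k)) \<longlonglongrightarrow> f x)"

end

theory Submission
  imports Defs
begin

lemma par_eq_translate:
  assumes "w \<in> affine hull C"
  shows "par C = (\<lambda>x. x - w) ` (affine hull C)"
proof
  show "par C \<subseteq> (\<lambda>x. x - w) ` (affine hull C)"
  proof
    fix d assume "d \<in> par C"
    then obtain u v where uv: "u \<in> affine hull C" "v \<in> affine hull C" "d = u - v"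
      unfolding par_def by auto
    have "w + 1 *\<^sub>R (u - v) \<in> affine hull C"
      by (rule mem_affine_3_minus) (use uv assms in auto)
    then show "d \<in> (\<lambda>x. x - w) ` (affine hull C)"
      using uv by (auto intro!: image_eqI[where x="w + (u - v)"])
  qed
next
  show "(\<lambda>x. x - w) ` (affine hull C) \<subseteq> par C"
    using assms unfolding par_def by auto
qed

lemma par_subspace:
  assumes "C \<noteq> {}"
  shows "subspace (par C)"
proof -
  obtain w where "w \<in> C" using assms by auto
  then have w: "w \<in> affine hull C" by (simp add: hull_inc)
  show ?thesis
    unfolding par_eq_translate[OF w]
    by (rule affine_diffs_subspace_subtract) (auto simp: w)
qed

lemma aff_plus_par:
  assumes "v \<in> affine hull C" "d \<in> par C"
  shows "v + d \<in> affine hull C"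
proof -
  have "d \<in> (\<lambda>x. x - v) ` (affine hull C)"
    using par_eq_translate[OF assms(1)] assms(2) by simp
  then show ?thesis by auto
qed

lemma sep_aff:
  fixes C :: "'a::euclidean_space set"
  assumes "convex C" "C \<noteq> {}" "w \<in> affine hull C" "w \<notin> C"
  obtains d where "d \<in> par C" "norm d = 1" "\<And>v. v \<in> C \<Longrightarrow> inner d v \<le> inner d w"
proof -
  let ?C = "(\<lambda>v. v - w) ` C"
  have "convex ?C" using assms(1) convex_translation[of C "-w"] by (simp add: convex_translation_subtract)
  moreover have "?C \<noteq> {}" using assms(2) by auto
  moreover have "0 \<notin> ?C" using assms(4) by auto
  ultimately obtain a where a: "a \<in> span ?C" "a \<noteq> 0" "\<And>x. x \<in> ?C \<Longrightarrow> 0 \<le> a \<bullet> x"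
    using separating_hyperplane_set_0_inspan by blast
  have sub: "?C \<subseteq> par C"
    using assms(3) unfolding par_def by (auto intro: hull_inc)
  have "span ?C \<subseteq> par C"
    using span_minimal[OF sub par_subspace[OF assms(2)]] .
  then have ap: "a \<in> par C" using a(1) by auto
  define d where "d = (- (1 / norm a)) *\<^sub>R a"
  have "d \<in> par C" unfolding d_def
    by (rule subspace_scale[OF par_subspace[OF assms(2)] ap])
  moreover have "norm d = 1" using a(2) by (simp add: d_def)
  moreover have "inner d v \<le> inner d w" if "v \<in> C" for v
  proof -
    have "0 \<le> a \<bullet> (v - w)" using a(3) that by auto
    then have "a \<bullet> w \<le> a \<bullet> v" by (simp add: inner_diff_right)
    then show ?thesis using a(2) unfolding d_def
      by (simp add: divide_le_cancel field_simps)
  qed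
  ultimately show ?thesis using that by blast
qed

lemma frechet_convex: "convex (frechet_subdiff f x)"
proof (rule convexI)
  fix v1 v2 and a b :: real
  assume v: "v1 \<in> frechet_subdiff f x" "v2 \<in> frechet_subdiff f x" and ab: "0 \<le> a" "0 \<le> b" "a + b = 1"
  have fin: "\<bar>f x\<bar> \<noteq> \<infinity>" using v(1) unfolding frechet_subdiff_def by auto
  then obtain r where r: "f x = ereal r" by (cases "f x") auto
  show "a *\<^sub>R v1 + b *\<^sub>R v2 \<in> frechet_subdiff f x"
    unfolding frechet_subdiff_def
  proof (intro CollectI conjI allI impI fin)
    fix e :: real assume e: "e > 0"
    obtain d1 where d1: "d1 > 0" "\<forall>y. dist y x < d1 \<longrightarrow> ereal (r + inner v1 (y - x) - e * norm (y - x)) \<le> f y"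
      using v(1) e unfolding frechet_subdiff_def r by auto
    obtain d2 where d2: "d2 > 0" "\<forall>y. dist y x < d2 \<longrightarrow> ereal (r + inner v2 (y - x) - e * norm (y - x)) \<le> f y"
      using v(2) e unfolding frechet_subdiff_def r by auto
    show "\<exists>d>0. \<forall>y. dist y x < d \<longrightarrow> ereal (real_of_ereal (f x) + inner (a *\<^sub>R v1 + b *\<^sub>R v2) (y - x) - e * norm (y - x)) \<le> f y"
    proof (intro exI[of _ "min d1 d2"] conjI allI impI)
      show "min d1 d2 > 0" using d1 d2 by auto
      fix y assume y: "dist y x < min d1 d2"
      have h1: "ereal (r + inner v1 (y - x) - e * norm (y - x)) \<le> f y" using d1 y by auto
      have h2: "ereal (r + inner v2 (y - x) - e * norm (y - x)) \<le> f y" using d2 y by auto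
      show "ereal (real_of_ereal (f x) + inner (a *\<^sub>R v1 + b *\<^sub>R v2) (y - x) - e * norm (y - x)) \<le> f y"
      proof (cases "f y")
        case (real s)
        have "r + inner v1 (y - x) - e * norm (y - x) \<le> s" using h1 real by simp
        moreover have "r + inner v2 (y - x) - e * norm (y - x) \<le> s" using h2 real by simp
        ultimately have "a * (r + inner v1 (y - x) - e * norm (y - x)) + b * (r + inner v2 (y - x) - e * norm (y - x)) \<le> a * s + b * s"
          using ab by (intro add_mono mult_left_mono) auto
        moreover have "a * (r + inner v1 (y - x) - e * norm (y - x)) + b * (r + inner v2 (y - x) - e * norm (y - x))
            = r + inner (a *\<^sub>R v1 + b *\<^sub>R v2) (y - x) - e * norm (y - x)"
        proof -
          have b: "b = 1 - a" using ab(3) by simp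
          show ?thesis unfolding b by (simp add: inner_add_left algebra_simps)
        qed
        moreover have "a * s + b * s = s"
        proof -
          have b: "b = 1 - a" using ab(3) by simp
          show ?thesis unfolding b by (simp add: algebra_simps)
        qed
        ultimately show ?thesis using real r by simp
      qed (use h1 in auto)
    qed
  qed
qed

lemma frechet_sub_limiting: "frechet_subdiff f x \<subseteq> limiting_subdiff f x"
proof
  fix v assume v: "v \<in> frechet_subdiff f x"
  then show "v \<in> limiting_subdiff f x"
    unfolding limiting_subdiff_def
    by (intro CollectI conjI exI[of _ "\<lambda>_. x"] exI[of _ "\<lambda>_. v"]) (auto simp: frechet_subdiff_def)
qed

lemma limiting_finite: "v \<in> limiting_subdiff f x \<Longrightarrow> \<bar>f x\<bar> \<noteq> \<infinity>"
  unfolding limiting_subdiff_def by auto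

lemma zero_frechet_argmin:
  assumes "x \<in> argmin_set f" "\<bar>f x\<bar> \<noteq> \<infinity>"
  shows "0 \<in> frechet_subdiff f x"
  unfolding frechet_subdiff_def
proof (intro CollectI conjI allI impI assms(2))
  fix e :: real assume "e > 0"
  show "\<exists>d>0. \<forall>y. dist y x < d \<longrightarrow> ereal (real_of_ereal (f x) + inner 0 (y - x) - e * norm (y - x)) \<le> f y"
  proof (intro exI[of _ 1] conjI allI impI)
    fix y
    have "ereal (real_of_ereal (f x) + inner 0 (y - x) - e * norm (y - x)) \<le> ereal (real_of_ereal (f x))"
      using \<open>e > 0\<close> by simp
    also have "\<dots> = f x" using assms(2) by (cases "f x") auto
    also have "\<dots> \<le> f y" using assms(1) unfolding argmin_set_def by auto
    finally show "ereal (real_of_ereal (f x) + inner 0 (y - x) - e * norm (y - x)) \<le> f y" .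
  qed simp
qed


definition chart :: "'a::euclidean_space set \<Rightarrow> 'a set \<Rightarrow> 'a set \<Rightarrow> 'a set \<Rightarrow> ('a \<Rightarrow> 'a) \<Rightarrow> ('a \<Rightarrow> 'a \<Rightarrow> 'a) \<Rightarrow> bool" where
  "chart M E U W \<phi> \<phi>' \<longleftrightarrow> subspace E \<and> open U \<and> openin (top_of_set E) W \<and>
     \<phi> ` W = M \<inter> U \<and> inj_on \<phi> W \<and> continuous_on (M \<inter> U) (inv_into W \<phi>) \<and>
     (\<forall>w\<in>W. (\<phi> has_derivative \<phi>' w) (at w within E) \<and> inj_on (\<phi>' w) E) \<and>
     (\<forall>u\<in>E. continuous_on W (\<lambda>z. \<phi>' z u))"

lemma local_param_chart:
  assumes "local_param M E U W \<phi>"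
  obtains \<phi>' where "chart M E U W \<phi> \<phi>'"
  using assms unfolding local_param_def chart_def by blast

lemma chart_W_sub: "chart M E U W \<phi> \<phi>' \<Longrightarrow> W \<subseteq> E"
  unfolding chart_def openin_contains_ball by blast

lemma chart_tangent_easy:
  assumes ch: "chart M E U W \<phi> \<phi>'" and w: "w \<in> W" and a: "a \<in> E"
  shows "\<phi>' w a \<in> tangent_space M (\<phi> w)"
proof -
  have E: "subspace E" using ch unfolding chart_def by auto
  have WE: "W \<subseteq> E" using ch by (rule chart_W_sub)
  have op: "openin (top_of_set E) W" using ch unfolding chart_def by auto
  obtain e' where e': "e' > 0" "ball w e' \<inter> E \<subseteq> W"
    using op w unfolding openin_contains_ball by blast
  have img: "\<phi> ` W = M \<inter> U" using ch unfolding chart_def by auto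
  define \<gamma> where "\<gamma> t = \<phi> (w + t *\<^sub>R a)" for t :: real
  have inW: "w + t *\<^sub>R a \<in> W" if "\<bar>t\<bar> < e' / (norm a + 1)" for t
  proof -
    have "w + t *\<^sub>R a \<in> E" using E WE w a by (simp add: subspace_add subspace_scale subset_iff)
    moreover have "dist w (w + t *\<^sub>R a) < e'"
    proof -
      have "dist w (w + t *\<^sub>R a) = \<bar>t\<bar> * norm a" by (simp add: dist_norm)
      also have "\<dots> \<le> \<bar>t\<bar> * (norm a + 1)" by (simp add: mult_left_mono)
      also have "\<dots> < e'" using that by (simp add: field_simps add_pos_nonneg)
      finally show ?thesis .
    qed
    ultimately show ?thesis using e' by auto
  qed
  have "curve_in M (\<phi> w) \<gamma> (\<phi>' w a)"
    unfolding curve_in_def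
  proof (intro conjI)
    show "\<gamma> 0 = \<phi> w" by (simp add: \<gamma>_def)
    show "\<exists>e>0. \<forall>t. \<bar>t\<bar> < e \<longrightarrow> \<gamma> t \<in> M"
    proof -
      have na: "0 < norm a + 1" by (metis add_nonneg_pos norm_ge_zero zero_less_one)
      have "0 < e' / (norm a + 1)" using e'(1) na by simp
      then show ?thesis using inW img by (intro exI[of _ "e' / (norm a + 1)"]) (auto simp: \<gamma>_def)
    qed
    have d1: "((\<lambda>t. w + t *\<^sub>R a) has_derivative (\<lambda>t. t *\<^sub>R a)) (at 0)"
      by (auto intro!: derivative_eq_intros)
    have d2: "(\<phi> has_derivative \<phi>' w) (at ((\<lambda>t. w + t *\<^sub>R a) 0) within (range (\<lambda>t. w + t *\<^sub>R a)))"
    proof -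
      have "(\<phi> has_derivative \<phi>' w) (at w within E)" using ch w unfolding chart_def by auto
      moreover have "range (\<lambda>t. w + t *\<^sub>R a) \<subseteq> E"
        using E WE w a by (auto simp: subspace_add subspace_scale subset_iff)
      ultimately show ?thesis by (auto intro: has_derivative_subset)
    qed
    have "((\<phi> \<circ> (\<lambda>t. w + t *\<^sub>R a)) has_derivative (\<phi>' w \<circ> (\<lambda>t. t *\<^sub>R a))) (at 0)"
      using diff_chain_within[OF d1 d2] .
    moreover have "bounded_linear (\<phi>' w)" using ch w unfolding chart_def by (auto dest: has_derivative_bounded_linear)
    ultimately have "bounded_linear (\<phi>' w)" "((\<phi> \<circ> (\<lambda>t. w + t *\<^sub>R a)) has_derivative (\<phi>' w \<circ> (\<lambda>t. t *\<^sub>R a))) (at 0)" by auto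
    note chainD = this(2)
    show "(\<gamma> has_vector_derivative \<phi>' w a) (at 0)"
      unfolding has_vector_derivative_def \<gamma>_def
    proof (rule has_derivative_eq_rhs[OF chainD[unfolded o_def]])
      show "(\<lambda>x. \<phi>' w (x *\<^sub>R a)) = (\<lambda>x. x *\<^sub>R \<phi>' w a)"
        using linear_scale[OF bounded_linear.linear[OF \<open>bounded_linear (\<phi>' w)\<close>]] by simp
    qed
  qed
  then show ?thesis unfolding tangent_space_def by blast
qed

lemma chart_curve:
  assumes ch: "chart M E U W \<phi> \<phi>'" and w0: "w0 \<in> W" and cv: "curve_in M (\<phi> w0) \<gamma> u"
  obtains a \<omega> d where "a \<in> E" "u = \<phi>' w0 a" "d > 0"
    "\<forall>t. \<bar>t\<bar> < d \<longrightarrow> \<omega> t \<in> W \<and> \<phi> (\<omega> t) = \<gamma> t" "\<omega> 0 = w0"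
    "(\<omega> has_derivative (\<lambda>t. t *\<^sub>R a)) (at 0)"
proof -
  define y0 where "y0 = \<phi> w0"
  define A where "A = \<phi>' w0"
  have E: "subspace E" and WE: "W \<subseteq> E" and oU: "open U" and img: "\<phi> ` W = M \<inter> U"
    and inj: "inj_on \<phi> W" and cinv: "continuous_on (M \<inter> U) (inv_into W \<phi>)"
    using ch chart_W_sub[OF ch] unfolding chart_def by auto
  have derA: "(\<phi> has_derivative A) (at w0 within E)" and injA: "inj_on A E"
    using ch w0 unfolding chart_def A_def by auto
  have blA: "bounded_linear A" using derA by (rule has_derivative_bounded_linear)
  have linA: "linear A" using blA by (rule bounded_linear.linear)
  obtain B where B: "range B \<subseteq> E" "linear B" "\<And>v. v \<in> E \<Longrightarrow> B (A v) = v"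
    using linear_exists_left_inverse_on[OF linA E injA] by blast
  obtain K where K: "K > 0" "\<And>x. norm (B x) \<le> K * norm x"
    using linear_bounded_pos[OF B(2)] by blast
  have \<gamma>0: "\<gamma> 0 = y0" using cv unfolding curve_in_def y0_def by auto
  obtain e where e: "e > 0" "\<And>t. \<bar>t\<bar> < e \<Longrightarrow> \<gamma> t \<in> M"
    using cv unfolding curve_in_def by auto
  have d\<gamma>: "(\<gamma> has_derivative (\<lambda>t. t *\<^sub>R u)) (at 0)"
    using cv unfolding curve_in_def has_vector_derivative_def by auto
  have d\<gamma>': "\<exists>d>0. \<forall>t. \<bar>t\<bar> < d \<longrightarrow> norm (\<gamma> t - y0 - t *\<^sub>R u) \<le> \<epsilon> * \<bar>t\<bar>" if "\<epsilon> > 0" for \<epsilon>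
    using d\<gamma> that unfolding has_derivative_within_alt by (auto simp: \<gamma>0)
  have d\<phi>: "\<exists>d>0. \<forall>w\<in>E. norm (w - w0) < d \<longrightarrow> norm (\<phi> w - y0 - A (w - w0)) \<le> \<epsilon> * norm (w - w0)"
    if "\<epsilon> > 0" for \<epsilon>
    using derA that unfolding has_derivative_within_alt y0_def by auto
  have y0U: "y0 \<in> M \<inter> U" using img w0 y0_def by auto
  obtain r where r: "r > 0" "ball y0 r \<subseteq> U" using oU y0U open_contains_ball by blast
  have invw0: "inv_into W \<phi> y0 = w0" using inj w0 y0_def by (simp add: inv_into_f_f)
  have icont: "\<exists>\<delta>>0. \<forall>y\<in>M \<inter> U. dist y y0 < \<delta> \<longrightarrow> dist (inv_into W \<phi> y) w0 < \<eta>" if "\<eta> > 0" for \<eta>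
    using cinv y0U that unfolding continuous_on_iff invw0[symmetric] by blast
  define \<omega> where "\<omega> t = inv_into W \<phi> (\<gamma> t)" for t
  obtain d1 where d1: "d1 > 0" "\<And>t. \<bar>t\<bar> < d1 \<Longrightarrow> norm (\<gamma> t - y0 - t *\<^sub>R u) \<le> 1 * \<bar>t\<bar>"
    using d\<gamma>'[of 1] by auto
  have nu: "0 < norm u + 1" by (metis add_nonneg_pos norm_ge_zero zero_less_one)
  have \<gamma>b: "norm (\<gamma> t - y0) \<le> (norm u + 1) * \<bar>t\<bar>" if "\<bar>t\<bar> < d1" for t
  proof -
    have "norm (\<gamma> t - y0) \<le> norm (\<gamma> t - y0 - t *\<^sub>R u) + norm (t *\<^sub>R u)"
      by (metis diff_add_cancel norm_triangle_ineq)
    also have "\<dots> \<le> \<bar>t\<bar> + \<bar>t\<bar> * norm u" using d1(2)[OF that] by simp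
    finally show ?thesis by (simp add: algebra_simps)
  qed
  have KF: "\<exists>d>0. \<forall>t. \<bar>t\<bar> < d \<longrightarrow> \<omega> t \<in> W \<and> \<phi> (\<omega> t) = \<gamma> t \<and> norm (\<omega> t - w0) < \<eta>"
    if eta: "\<eta> > 0" for \<eta>
  proof -
    obtain \<delta> where \<delta>: "\<delta> > 0" "\<forall>y\<in>M \<inter> U. dist y y0 < \<delta> \<longrightarrow> dist (inv_into W \<phi> y) w0 < \<eta>"
      using icont[OF eta] by blast
    define d where "d = min (min e d1) (min r \<delta> / (norm u + 1))"
    have "d > 0" using e d1 r \<delta> nu by (simp add: d_def)
    moreover have "\<omega> t \<in> W \<and> \<phi> (\<omega> t) = \<gamma> t \<and> norm (\<omega> t - w0) < \<eta>" if t: "\<bar>t\<bar> < d" for t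
    proof -
      have "\<bar>t\<bar> < d1" "\<bar>t\<bar> < e" using t by (auto simp: d_def)
      have "(norm u + 1) * \<bar>t\<bar> < (norm u + 1) * (min r \<delta> / (norm u + 1))"
        using t nu by (intro mult_strict_left_mono) (auto simp: d_def)
      then have "norm (\<gamma> t - y0) < min r \<delta>"
        using \<gamma>b[OF \<open>\<bar>t\<bar> < d1\<close>] nu by simp
      then have dd: "dist (\<gamma> t) y0 < r" "dist (\<gamma> t) y0 < \<delta>" by (auto simp: dist_norm)
      then have "\<gamma> t \<in> U" using r by (auto simp: dist_commute subset_iff)
      then have gMU: "\<gamma> t \<in> M \<inter> U" using e(2)[OF \<open>\<bar>t\<bar> < e\<close>] by auto
      then have "\<gamma> t \<in> \<phi> ` W" using img by simp
      then have "\<omega> t \<in> W" "\<phi> (\<omega> t) = \<gamma> t" unfolding \<omega>_def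
        by (auto intro: inv_into_into f_inv_into_f)
      moreover have "norm (\<omega> t - w0) < \<eta>" using \<delta>(2) gMU dd(2) unfolding \<omega>_def by (auto simp: dist_norm)
      ultimately show ?thesis by blast
    qed
    ultimately show ?thesis by blast
  qed
  define C where "C = 2 * K * (norm u + 1)"
  have Cpos: "C > 0" using K nu by (simp add: C_def)
  have LB: "\<exists>d>0. \<forall>t. \<bar>t\<bar> < d \<longrightarrow> norm (\<omega> t - w0) \<le> C * \<bar>t\<bar>"
  proof -
    obtain \<delta>0 where \<delta>0: "\<delta>0 > 0" "\<forall>w\<in>E. norm (w - w0) < \<delta>0 \<longrightarrow> norm (\<phi> w - y0 - A (w - w0)) \<le> (1 / (2 * K)) * norm (w - w0)"
      using d\<phi>[of "1 / (2 * K)"] K by auto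
    obtain dk where dk: "dk > 0" "\<forall>t. \<bar>t\<bar> < dk \<longrightarrow> \<omega> t \<in> W \<and> \<phi> (\<omega> t) = \<gamma> t \<and> norm (\<omega> t - w0) < \<delta>0"
      using KF[OF \<delta>0(1)] by blast
    have "norm (\<omega> t - w0) \<le> C * \<bar>t\<bar>" if t: "\<bar>t\<bar> < min dk d1" for t
    proof -
      define D where "D = \<omega> t - w0"
      have tt: "\<bar>t\<bar> < dk" "\<bar>t\<bar> < d1" using t by auto
      have DE: "D \<in> E" using dk(2) tt(1) WE w0 E unfolding D_def by (auto intro: subspace_diff)
      define R where "R = \<phi> (\<omega> t) - y0 - A D"
      have nR: "norm R \<le> (1 / (2 * K)) * norm D"
      proof -
        have wE: "\<omega> t \<in> E" using dk(2) tt(1) WE by auto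
        have "norm (\<phi> (\<omega> t) - y0 - A (\<omega> t - w0)) \<le> (1 / (2 * K)) * norm (\<omega> t - w0)"
          using \<delta>0(2) wE dk(2) tt(1) by blast
        then show ?thesis unfolding R_def D_def .
      qed
      have AD: "A D = (\<gamma> t - y0) - R" using dk(2) tt(1) unfolding R_def by simp
      have "norm D = norm (B (A D))" using B(3)[OF DE] by simp
      also have "\<dots> \<le> K * norm (A D)" by (rule K(2))
      also have "\<dots> \<le> K * (norm (\<gamma> t - y0) + norm R)"
        unfolding AD using K(1) by (intro mult_left_mono norm_triangle_ineq4) auto
      also have "\<dots> \<le> K * ((norm u + 1) * \<bar>t\<bar> + (1 / (2 * K)) * norm D)"
        using K(1) \<gamma>b[OF tt(2)] nR by (intro mult_left_mono add_mono) auto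
      also have "\<dots> = K * (norm u + 1) * \<bar>t\<bar> + norm D / 2"
        using K(1) by (simp add: field_simps)
      finally show ?thesis unfolding D_def C_def by simp
    qed
    then show ?thesis using dk(1) d1(1) by (intro exI[of _ "min dk d1"]) auto
  qed
  define a where "a = B u"
  have aE: "a \<in> E" using B(1) unfolding a_def by auto
  have \<omega>0: "\<omega> 0 = w0" unfolding \<omega>_def \<gamma>0 by (rule invw0)
  have d\<omega>: "(\<omega> has_derivative (\<lambda>t. t *\<^sub>R a)) (at 0)"
    unfolding has_derivative_within_alt
  proof (intro conjI allI impI)
    show "bounded_linear (\<lambda>t. t *\<^sub>R a)" by (rule bounded_linear_scaleR_left)
    fix \<epsilon> :: real assume \<epsilon>: "\<epsilon> > 0"
    define \<epsilon>1 where "\<epsilon>1 = \<epsilon> / (2 * K * (C + 1))"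
    have \<epsilon>1: "\<epsilon>1 > 0" using \<epsilon> K Cpos by (simp add: \<epsilon>1_def)
    obtain \<delta>1 where \<delta>1: "\<delta>1 > 0" "\<forall>w\<in>E. norm (w - w0) < \<delta>1 \<longrightarrow> norm (\<phi> w - y0 - A (w - w0)) \<le> \<epsilon>1 * norm (w - w0)"
      using d\<phi>[OF \<epsilon>1] by auto
    obtain dk where dk: "dk > 0" "\<forall>t. \<bar>t\<bar> < dk \<longrightarrow> \<omega> t \<in> W \<and> \<phi> (\<omega> t) = \<gamma> t \<and> norm (\<omega> t - w0) < \<delta>1"
      using KF[OF \<delta>1(1)] by blast
    define \<epsilon>2 where "\<epsilon>2 = \<epsilon> / (2 * K)"
    have \<epsilon>2: "\<epsilon>2 > 0" using \<epsilon> K by (simp add: \<epsilon>2_def)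
    obtain d2 where d2: "d2 > 0" "\<forall>t. \<bar>t\<bar> < d2 \<longrightarrow> norm (\<gamma> t - y0 - t *\<^sub>R u) \<le> \<epsilon>2 * \<bar>t\<bar>"
      using d\<gamma>'[OF \<epsilon>2] by auto
    obtain dL where dL: "dL > 0" "\<forall>t. \<bar>t\<bar> < dL \<longrightarrow> norm (\<omega> t - w0) \<le> C * \<bar>t\<bar>"
      using LB by auto
    show "\<exists>d>0. \<forall>t\<in>UNIV. norm (t - 0) < d \<longrightarrow> norm (\<omega> t - \<omega> 0 - (t - 0) *\<^sub>R a) \<le> \<epsilon> * norm (t - 0)"
    proof (intro exI[of _ "min (min dk d2) dL"] conjI ballI impI)
      show "min (min dk d2) dL > 0" using dk d2 dL by auto
      fix t :: real assume "norm (t - 0) < min (min dk d2) dL"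
      then have tt: "\<bar>t\<bar> < dk" "\<bar>t\<bar> < d2" "\<bar>t\<bar> < dL" by auto
      define D where "D = \<omega> t - w0"
      have DE: "D \<in> E" using dk(2) tt(1) WE w0 E unfolding D_def by (auto intro: subspace_diff)
      define R where "R = \<phi> (\<omega> t) - y0 - A D"
      have nR: "norm R \<le> \<epsilon>1 * norm D"
      proof -
        have wE: "\<omega> t \<in> E" using dk(2) tt(1) WE by auto
        have "norm (\<phi> (\<omega> t) - y0 - A (\<omega> t - w0)) \<le> \<epsilon>1 * norm (\<omega> t - w0)"
          using \<delta>1(2) wE dk(2) tt(1) by blast
        then show ?thesis unfolding R_def D_def .
      qed
      have nD: "norm D \<le> C * \<bar>t\<bar>" using dL(2) tt(3) unfolding D_def by auto
      have AD: "A D - t *\<^sub>R u = (\<gamma> t - y0 - t *\<^sub>R u) - R" using dk(2) tt(1) unfolding R_def by simp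
      have "D - t *\<^sub>R a = B (A D) - B (t *\<^sub>R u)" using B(3)[OF DE] unfolding a_def
        by (simp add: linear_scale[OF B(2)])
      also have "\<dots> = B (A D - t *\<^sub>R u)" by (simp add: linear_diff[OF B(2)])
      finally have "norm (D - t *\<^sub>R a) \<le> K * norm (A D - t *\<^sub>R u)" using K(2) by metis
      also have "\<dots> \<le> K * (\<epsilon>2 * \<bar>t\<bar> + \<epsilon>1 * (C * \<bar>t\<bar>))"
      proof -
        have "norm (A D - t *\<^sub>R u) \<le> norm (\<gamma> t - y0 - t *\<^sub>R u) + norm R"
          unfolding AD by (rule norm_triangle_ineq4)
        also have "\<dots> \<le> \<epsilon>2 * \<bar>t\<bar> + \<epsilon>1 * (C * \<bar>t\<bar>)"
          using d2(2) tt(2) nR nD \<epsilon>1 by (intro add_mono) (auto intro: order_trans mult_left_mono)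
        finally show ?thesis using K(1) by (intro mult_left_mono) auto
      qed
      also have "\<dots> \<le> \<epsilon> * \<bar>t\<bar>"
      proof -
        have q: "2 * K * (C + 1) \<noteq> 0" using K(1) Cpos by auto
        have m: "\<epsilon>1 * (2 * K * (C + 1)) = \<epsilon>" unfolding \<epsilon>1_def using q by simp
        have m2: "2 * (K * (\<epsilon>1 * (C + 1))) = \<epsilon>" using m by (simp add: ac_simps)
        have "K * (\<epsilon>1 * C) \<le> K * (\<epsilon>1 * (C + 1))"
          using K(1) \<epsilon>1 by (intro mult_left_mono) auto
        then have "K * (\<epsilon>1 * C) \<le> \<epsilon> / 2" using m2 by linarith
        then have "K * \<epsilon>2 * \<bar>t\<bar> + K * (\<epsilon>1 * C) * \<bar>t\<bar> \<le> \<epsilon> / 2 * \<bar>t\<bar> + \<epsilon> / 2 * \<bar>t\<bar>"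
          using K(1) unfolding \<epsilon>2_def by (intro add_mono mult_right_mono) auto
        then show ?thesis by (simp add: algebra_simps)
      qed
      finally show "norm (\<omega> t - \<omega> 0 - (t - 0) *\<^sub>R a) \<le> \<epsilon> * norm (t - 0)"
        unfolding D_def \<omega>0 by simp
    qed
  qed
  obtain dk0 where dk0: "dk0 > 0" "\<forall>t. \<bar>t\<bar> < dk0 \<longrightarrow> \<omega> t \<in> W \<and> \<phi> (\<omega> t) = \<gamma> t \<and> norm (\<omega> t - w0) < 1"
    using KF[of 1] by auto
  have uA: "u = A a"
  proof -
    have s1: "(\<omega> has_derivative (\<lambda>t. t *\<^sub>R a)) (at 0 within ball 0 dk0)"
      using d\<omega> by (rule has_derivative_at_withinI)
    have "\<omega> ` ball 0 dk0 \<subseteq> E" using dk0 WE by (auto simp: subset_iff)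
    then have s2: "(\<phi> has_derivative A) (at (\<omega> 0) within \<omega> ` ball 0 dk0)"
      unfolding \<omega>0 using derA by (rule has_derivative_subset[rotated])
    have "((\<phi> \<circ> \<omega>) has_derivative (A \<circ> (\<lambda>t. t *\<^sub>R a))) (at 0 within ball 0 dk0)"
      by (rule diff_chain_within[OF s1 s2])
    then have "(\<gamma> has_derivative (A \<circ> (\<lambda>t. t *\<^sub>R a))) (at 0 within ball 0 dk0)"
      by (rule has_derivative_transform_within[OF _ dk0(1)]) (use dk0 in auto)
    moreover have eqat: "at (0::real) within ball 0 dk0 = at 0" using dk0(1) by (intro at_within_open) auto
    ultimately have "(\<gamma> has_derivative (A \<circ> (\<lambda>t. t *\<^sub>R a))) (at 0)"
      by simp
    from has_derivative_unique[OF d\<gamma> this] have "(\<lambda>t. t *\<^sub>R u) 1 = (A \<circ> (\<lambda>t. t *\<^sub>R a)) 1"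
      by (rule fun_cong)
    then show ?thesis by simp
  qed
  show ?thesis
    by (rule that[OF aE uA[unfolded A_def] dk0(1) _ \<omega>0 d\<omega>]) (use dk0 in auto)
qed


lemma rc_chart:
  assumes rC: "restricted_C1 f M y" and yM: "y \<in> M"
  obtains E U W \<phi> \<phi>' F' w0 where "chart M E U W \<phi> \<phi>'" "w0 \<in> W" "\<phi> w0 = y"
    "\<And>w. w \<in> W \<Longrightarrow> \<bar>f (\<phi> w)\<bar> \<noteq> \<infinity>"
    "\<And>w. w \<in> W \<Longrightarrow> ((\<lambda>w. real_of_ereal (f (\<phi> w))) has_derivative F' w) (at w within E)"
proof -
  obtain r where r: "r > 0" "\<forall>p\<in>M \<inter> ball y r. \<exists>E U W \<phi>. p \<in> U \<and> local_param M E U W \<phi> \<and>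
       (\<forall>w\<in>W. \<bar>f (\<phi> w)\<bar> \<noteq> \<infinity>) \<and> C1_within E W (\<lambda>w. real_of_ereal (f (\<phi> w)))"
    using rC unfolding restricted_C1_def by blast
  then obtain E U W \<phi> where c: "y \<in> U" "local_param M E U W \<phi>"
       "\<forall>w\<in>W. \<bar>f (\<phi> w)\<bar> \<noteq> \<infinity>" "C1_within E W (\<lambda>w. real_of_ereal (f (\<phi> w)))"
    using yM r(1) by (metis IntI centre_in_ball)
  obtain \<phi>' where ch: "chart M E U W \<phi> \<phi>'" using local_param_chart[OF c(2)] by blast
  obtain F' where F': "\<forall>w\<in>W. ((\<lambda>w. real_of_ereal (f (\<phi> w))) has_derivative F' w) (at w within E)"
    using c(4) unfolding C1_within_def by blast
  have "y \<in> \<phi> ` W" using ch c(1) yM unfolding chart_def by auto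
  then obtain w0 where "w0 \<in> W" "\<phi> w0 = y" by auto
  then show ?thesis using that[OF ch _ _ _ , of w0 F'] c(3) F' by auto
qed

lemma curve_finite:
  assumes rC: "restricted_C1 f M y" and yM: "y \<in> M" and cv: "curve_in M y \<gamma> u"
  obtains d where "d > 0" "\<And>t. \<bar>t\<bar> < d \<Longrightarrow> \<bar>f (\<gamma> t)\<bar> \<noteq> \<infinity>"
proof -
  obtain E U W \<phi> \<phi>' F' w0 where ch: "chart M E U W \<phi> \<phi>'" and w0: "w0 \<in> W" "\<phi> w0 = y"
    and fin: "\<And>w. w \<in> W \<Longrightarrow> \<bar>f (\<phi> w)\<bar> \<noteq> \<infinity>"
    using rc_chart[OF rC yM] by metis
  obtain a \<omega> d where "d > 0" "\<forall>t. \<bar>t\<bar> < d \<longrightarrow> \<omega> t \<in> W \<and> \<phi> (\<omega> t) = \<gamma> t"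
    using chart_curve[OF ch w0(1)] cv w0(2) by metis
  then show ?thesis using that fin by metis
qed

lemma grad_char:
  assumes rC: "restricted_C1 f M y" and yM: "y \<in> M"
  shows "riem_grad f M y \<in> tangent_space M y \<and>
    (\<forall>\<gamma> u. curve_in M y \<gamma> u \<longrightarrow>
        ((\<lambda>t. real_of_ereal (f (\<gamma> t))) has_real_derivative (inner (riem_grad f M y) u)) (at 0))"
proof -
  obtain E U W \<phi> \<phi>' F' w0 where ch: "chart M E U W \<phi> \<phi>'" and w0: "w0 \<in> W" "\<phi> w0 = y"
    and fin: "\<And>w. w \<in> W \<Longrightarrow> \<bar>f (\<phi> w)\<bar> \<noteq> \<infinity>"
    and F': "\<And>w. w \<in> W \<Longrightarrow> ((\<lambda>w. real_of_ereal (f (\<phi> w))) has_derivative F' w) (at w within E)"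
    using rc_chart[OF rC yM] by metis
  define F where "F w = real_of_ereal (f (\<phi> w))" for w
  define l0 where "l0 = F' w0"
  define A where "A = \<phi>' w0"
  have E: "subspace E" and WE: "W \<subseteq> E" using ch chart_W_sub[OF ch] unfolding chart_def by auto
  have derA: "(\<phi> has_derivative A) (at w0 within E)" and injA: "inj_on A E"
    using ch w0 unfolding chart_def A_def by auto
  have linA: "linear A" using derA by (intro bounded_linear.linear has_derivative_bounded_linear)
  have dF: "(F has_derivative l0) (at w0 within E)" using F'[OF w0(1)] unfolding F_def l0_def .
  have linl0: "linear l0" using dF by (intro bounded_linear.linear has_derivative_bounded_linear)
  obtain B where B: "range B \<subseteq> E" "linear B" "\<And>v. v \<in> E \<Longrightarrow> B (A v) = v"
    using linear_exists_left_inverse_on[OF linA E injA] by blast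
  define L where "L x = l0 (B x)" for x
  have linL: "linear L" unfolding L_def using linear_compose[OF B(2) linl0] by (simp add: o_def)
  define c where "c = adjoint L 1"
  have Lc: "L x = inner x c" for x
    using adjoint_works[OF linL, of x 1] unfolding c_def by simp
  define V where "V = A ` E"
  have V: "subspace V" unfolding V_def by (rule real_vector.linear_subspace_image[OF linA E])
  obtain g z where gz: "g \<in> span V" "\<And>w. w \<in> span V \<Longrightarrow> orthogonal z w" "c = g + z"
    using orthogonal_subspace_decomp_exists[of V c] by blast
  have gV: "g \<in> V" using gz(1) V by (metis span_eq_iff)
  have gA: "inner g (A a) = l0 a" if "a \<in> E" for a
  proof -
    have "A a \<in> span V" using that unfolding V_def by (simp add: span_base)
    then have "inner z (A a) = 0" using gz(2) unfolding orthogonal_def by blast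
    then have "inner g (A a) = inner c (A a)" unfolding gz(3) by (simp add: inner_add_left)
    also have "\<dots> = L (A a)" by (simp add: Lc inner_commute)
    also have "\<dots> = l0 a" unfolding L_def using B(3)[OF that] by simp
    finally show ?thesis .
  qed
  have gT: "g \<in> tangent_space M y"
  proof -
    obtain a0 where "a0 \<in> E" "g = A a0" using gV unfolding V_def by auto
    then show ?thesis using chart_tangent_easy[OF ch w0(1)] w0(2) unfolding A_def by auto
  qed
  have Pg: "((\<lambda>t. real_of_ereal (f (\<gamma> t))) has_real_derivative (inner g u)) (at 0)"
    if cv: "curve_in M y \<gamma> u" for \<gamma> u
  proof -
    obtain a \<omega> d where ad: "a \<in> E" "u = \<phi>' w0 a" "d > 0"
      "\<forall>t. \<bar>t\<bar> < d \<longrightarrow> \<omega> t \<in> W \<and> \<phi> (\<omega> t) = \<gamma> t" "\<omega> 0 = w0"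
      "(\<omega> has_derivative (\<lambda>t. t *\<^sub>R a)) (at 0)"
      using chart_curve[OF ch w0(1)] cv w0(2) by metis
    have s1: "(\<omega> has_derivative (\<lambda>t. t *\<^sub>R a)) (at 0 within ball 0 d)"
      using ad(6) by (rule has_derivative_at_withinI)
    have "\<omega> ` ball 0 d \<subseteq> E" using ad(4) WE by (auto simp: subset_iff)
    then have s2: "(F has_derivative l0) (at (\<omega> 0) within \<omega> ` ball 0 d)"
      unfolding ad(5) using dF by (rule has_derivative_subset[rotated])
    have "((F \<circ> \<omega>) has_derivative (l0 \<circ> (\<lambda>t. t *\<^sub>R a))) (at 0 within ball 0 d)"
      by (rule diff_chain_within[OF s1 s2])
    then have "((\<lambda>t. real_of_ereal (f (\<gamma> t))) has_derivative (l0 \<circ> (\<lambda>t. t *\<^sub>R a))) (at 0 within ball 0 d)"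
      by (rule has_derivative_transform_within[OF _ ad(3)]) (use ad(3,4) in \<open>auto simp: F_def\<close>)
    moreover have eqat: "at (0::real) within ball 0 d = at 0" using ad(3) by (intro at_within_open) auto
    ultimately have D: "((\<lambda>t. real_of_ereal (f (\<gamma> t))) has_derivative (l0 \<circ> (\<lambda>t. t *\<^sub>R a))) (at 0)"
      by simp
    have "(l0 \<circ> (\<lambda>t. t *\<^sub>R a)) = (*) (inner g u)"
    proof
      fix t :: real
      have "(l0 \<circ> (\<lambda>t. t *\<^sub>R a)) t = t * l0 a" using linear_scale[OF linl0] by simp
      also have "\<dots> = inner g u * t" using gA[OF ad(1)] ad(2) unfolding A_def by simp
      finally show "(l0 \<circ> (\<lambda>t. t *\<^sub>R a)) t = (*) (inner g u) t" by simp
    qed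
    then show ?thesis using D unfolding has_field_derivative_def by simp
  qed
  have uniq: "v = g" if v: "v \<in> tangent_space M y"
    "\<forall>\<gamma> u. curve_in M y \<gamma> u \<longrightarrow> ((\<lambda>t. real_of_ereal (f (\<gamma> t))) has_real_derivative (inner v u)) (at 0)" for v
  proof -
    have eq: "inner v u = inner g u" if uT: "u \<in> tangent_space M y" for u
    proof -
      obtain \<gamma> where "curve_in M y \<gamma> u" using uT unfolding tangent_space_def by auto
      then show ?thesis using v(2) Pg DERIV_unique by blast
    qed
    have "inner (v - g) (v - g) = 0"
      using eq[OF v(1)] eq[OF gT] by (simp add: inner_diff_left inner_diff_right inner_commute)
    then show ?thesis by simp
  qed
  have "riem_grad f M y = g"
    unfolding riem_grad_def
    by (rule the_equality) (use gT Pg uniq in blast)+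
  then show ?thesis using gT Pg by simp
qed

lemma one_sided:
  fixes \<gamma> :: "real \<Rightarrow> 'a::euclidean_space"
  assumes d0: "d0 > 0" and fin: "\<And>t. \<bar>t\<bar> < d0 \<Longrightarrow> \<bar>f (\<gamma> t)\<bar> \<noteq> \<infinity>"
    and dp: "((\<lambda>t. real_of_ereal (f (\<gamma> t))) has_real_derivative D) (at 0)"
    and d\<gamma>: "(\<gamma> has_vector_derivative u) (at 0)" and \<gamma>0: "\<gamma> 0 = y"
    and v: "v \<in> frechet_subdiff f y"
  shows "inner v u \<le> D"
proof (rule field_le_epsilon)
  define p where "p t = real_of_ereal (f (\<gamma> t))" for t
  define Q where "Q = 2 + norm v + norm u"
  have Q: "Q > 0" unfolding Q_def by (simp add: add_pos_nonneg)
  fix e :: real assume e: "e > 0"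
  define \<epsilon> where "\<epsilon> = min 1 (e / Q)"
  have \<epsilon>: "\<epsilon> > 0" "\<epsilon> \<le> 1" "\<epsilon> * Q \<le> e" using e Q unfolding \<epsilon>_def
    by (auto simp: min_mult_distrib_right field_simps min_def)
  obtain d1 where d1: "d1 > 0" "\<forall>t. norm (t - 0) < d1 \<longrightarrow> norm (p t - p 0 - D * (t - 0)) \<le> \<epsilon> * norm (t - 0)"
    using dp \<epsilon>(1) unfolding has_field_derivative_def has_derivative_within_alt p_def by fastforce
  obtain d2 where d2: "d2 > 0" "\<forall>t. norm (t - 0) < d2 \<longrightarrow> norm (\<gamma> t - \<gamma> 0 - (t - 0) *\<^sub>R u) \<le> \<epsilon> * norm (t - 0)"
    using d\<gamma> \<epsilon>(1) unfolding has_vector_derivative_def has_derivative_within_alt by fastforce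
  have fy: "\<bar>f y\<bar> \<noteq> \<infinity>" using v unfolding frechet_subdiff_def by auto
  obtain dF where dF: "dF > 0" "\<forall>z. dist z y < dF \<longrightarrow> ereal (real_of_ereal (f y) + inner v (z - y) - \<epsilon> * norm (z - y)) \<le> f z"
    using v \<epsilon>(1) unfolding frechet_subdiff_def by blast
  have nu: "norm u + 1 > 0" by (simp add: add_nonneg_pos)
  define m where "m = min (min d0 d1) (min d2 (dF / (norm u + 1)))"
  have m: "m > 0" "m \<le> d0" "m \<le> d1" "m \<le> d2" "m \<le> dF / (norm u + 1)"
    using d0 d1 d2 dF nu unfolding m_def by auto
  define t where "t = m / 2"
  have t: "t > 0" "t < d0" "t < d1" "t < d2" "t < dF / (norm u + 1)"
    using m unfolding t_def by linarith+
  have a1: "p t - p 0 \<le> D * t + \<epsilon> * t"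
    using d1(2) t by (auto dest!: spec[of _ t] simp: abs_le_iff)
  have g1: "norm (\<gamma> t - y - t *\<^sub>R u) \<le> \<epsilon> * t" using d2(2) t \<gamma>0 by (auto dest!: spec[of _ t])
  have a4: "norm (\<gamma> t - y) \<le> t * norm u + \<epsilon> * t"
  proof -
    have "norm (\<gamma> t - y) \<le> norm (\<gamma> t - y - t *\<^sub>R u) + norm (t *\<^sub>R u)"
      by (metis diff_add_cancel norm_triangle_ineq)
    then show ?thesis using g1 t(1) by simp
  qed
  have "norm (\<gamma> t - y) < dF"
  proof -
    have "t * norm u + \<epsilon> * t \<le> t * (norm u + 1)" using \<epsilon>(2) t(1) by (simp add: algebra_simps)
    also have "\<dots> < dF" using t(5) nu by (simp add: field_simps)
    finally show ?thesis using a4 by simp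
  qed
  then have "ereal (real_of_ereal (f y) + inner v (\<gamma> t - y) - \<epsilon> * norm (\<gamma> t - y)) \<le> f (\<gamma> t)"
    using dF(2) by (simp add: dist_norm)
  moreover have "f (\<gamma> t) = ereal (p t)" using fin[of t] t unfolding p_def by (cases "f (\<gamma> t)") auto
  ultimately have "ereal (real_of_ereal (f y) + inner v (\<gamma> t - y) - \<epsilon> * norm (\<gamma> t - y)) \<le> ereal (p t)"
    by simp
  then have a2: "p 0 + inner v (\<gamma> t - y) - \<epsilon> * norm (\<gamma> t - y) \<le> p t"
    using \<gamma>0 unfolding p_def by (simp only: ereal_less_eq(3))
  have a3: "inner v (\<gamma> t - y) \<ge> t * inner v u - norm v * (\<epsilon> * t)"
  proof -
    have "inner v (\<gamma> t - y) = t * inner v u + inner v (\<gamma> t - y - t *\<^sub>R u)"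
      by (simp add: inner_diff_right)
    moreover have "\<bar>inner v (\<gamma> t - y - t *\<^sub>R u)\<bar> \<le> norm v * (\<epsilon> * t)"
      using Cauchy_Schwarz_ineq2[of v "\<gamma> t - y - t *\<^sub>R u"] g1
      by (meson norm_ge_zero mult_left_mono order_trans)
    ultimately show ?thesis by linarith
  qed
  have a5: "\<epsilon> * norm (\<gamma> t - y) \<le> \<epsilon> * (t * norm u) + \<epsilon> * (\<epsilon> * t)"
    using mult_left_mono[OF a4, of \<epsilon>] \<epsilon>(1) by (simp add: algebra_simps)
  have a6: "\<epsilon> * (\<epsilon> * t) \<le> \<epsilon> * t" using \<epsilon> t(1) by (simp add: mult_le_cancel_right1 mult_left_le_one_le)
  have "t * (inner v u - D) \<le> t * (\<epsilon> * Q)"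
  proof -
    have "t * (\<epsilon> * Q) = 2 * (\<epsilon> * t) + norm v * (\<epsilon> * t) + \<epsilon> * (t * norm u)"
      unfolding Q_def by (simp add: algebra_simps)
    then show ?thesis using a1 a2 a3 a5 a6 by (simp add: algebra_simps)
  qed
  then have "inner v u - D \<le> \<epsilon> * Q" using t(1) by (simp add: mult_le_cancel_left_pos)
  then show "inner v u \<le> D + e" using \<epsilon>(3) by linarith
qed

lemma curve_neg:
  assumes "curve_in M y \<gamma> u"
  shows "curve_in M y (\<lambda>t. \<gamma> (- t)) (- u)"
proof -
  obtain e where e: "e > 0" "\<forall>t. \<bar>t\<bar> < e \<longrightarrow> \<gamma> t \<in> M" using assms unfolding curve_in_def by auto
  have d: "(\<gamma> has_vector_derivative u) (at 0)" using assms unfolding curve_in_def by auto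
  have m: "(uminus has_vector_derivative (-1)) (at (0::real))"
    by (auto intro!: derivative_eq_intros)
  have "((\<gamma> \<circ> uminus) has_vector_derivative ((-1) *\<^sub>R u)) (at 0)"
    by (rule vector_diff_chain_at[OF m]) (simp add: d)
  then show ?thesis using assms e unfolding curve_in_def by (auto simp: o_def)
qed

lemma frechet_normal:
  assumes rC: "restricted_C1 f M y" and yM: "y \<in> M" and v: "v \<in> frechet_subdiff f y"
  shows "v - riem_grad f M y \<in> normal_space M y"
proof -
  define g where "g = riem_grad f M y"
  have G: "\<forall>\<gamma> u. curve_in M y \<gamma> u \<longrightarrow>
        ((\<lambda>t. real_of_ereal (f (\<gamma> t))) has_real_derivative (inner g u)) (at 0)"
    using grad_char[OF rC yM] unfolding g_def by blast
  have le: "inner v u \<le> inner g u" if cv: "curve_in M y \<gamma> u" for \<gamma> u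
  proof -
    obtain d where "d > 0" "\<And>t. \<bar>t\<bar> < d \<Longrightarrow> \<bar>f (\<gamma> t)\<bar> \<noteq> \<infinity>"
      using curve_finite[OF rC yM cv] by blast
    then show ?thesis
      using one_sided[of d f \<gamma> "inner g u" u y v] G cv v unfolding curve_in_def by blast
  qed
  have "inner (v - g) u = 0" if uT: "u \<in> tangent_space M y" for u
  proof -
    obtain \<gamma> where cv: "curve_in M y \<gamma> u" using uT unfolding tangent_space_def by auto
    have "inner v u \<le> inner g u" using le[OF cv] .
    moreover have "inner v (-u) \<le> inner g (-u)" using le[OF curve_neg[OF cv]] .
    ultimately show ?thesis by (simp add: inner_diff_left)
  qed
  then show ?thesis unfolding normal_space_def g_def by blast
qed


lemma ps_facts:
  assumes "partly_smooth_at f M z"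
  shows "z \<in> M" "frechet_subdiff f z = limiting_subdiff f z" "limiting_subdiff f z \<noteq> {}"
    "restricted_C1 f M z" "par (limiting_subdiff f z) = normal_space M z"
    "\<And>y X. y \<in> limiting_subdiff f z \<Longrightarrow> (\<forall>k. X k \<in> M) \<Longrightarrow> X \<longlonglongrightarrow> z \<Longrightarrow>
        \<exists>Y. (\<forall>k. Y k \<in> limiting_subdiff f (X k)) \<and> Y \<longlonglongrightarrow> y"
proof -
  obtain r where r: "r > 0" "\<forall>z'\<in>M \<inter> ball z r. frechet_subdiff f z' = limiting_subdiff f z' \<and> limiting_subdiff f z' \<noteq> {}"
    and zM: "z \<in> M"
    using assms unfolding partly_smooth_at_def by blast
  then have "z \<in> M \<inter> ball z r" by auto
  then show "frechet_subdiff f z = limiting_subdiff f z" "limiting_subdiff f z \<noteq> {}"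
    using r(2) by auto
  show "z \<in> M" by (rule zM)
  show "restricted_C1 f M z" "par (limiting_subdiff f z) = normal_space M z"
    using assms unfolding partly_smooth_at_def by auto
  show "\<And>y X. y \<in> limiting_subdiff f z \<Longrightarrow> (\<forall>k. X k \<in> M) \<Longrightarrow> X \<longlonglongrightarrow> z \<Longrightarrow>
        \<exists>Y. (\<forall>k. Y k \<in> limiting_subdiff f (X k)) \<and> Y \<longlonglongrightarrow> y"
    using assms unfolding partly_smooth_at_def by blast
qed

lemma seq_to:
  fixes X :: "nat \<Rightarrow> 'a::real_normed_vector"
  assumes "\<And>k. norm (X k - a) < inverse (real (Suc k))"
  shows "X \<longlonglongrightarrow> a"
proof (rule LIMSEQ_I)
  fix r :: real assume r: "r > 0"
  obtain n where n: "inverse (real (Suc n)) < r" using reals_Archimedean[OF r] by blast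
  have "norm (X k - a) < r" if "k \<ge> n" for k
  proof -
    have "inverse (real (Suc k)) \<le> inverse (real (Suc n))" using that by (simp add: field_simps)
    then show ?thesis using assms[of k] n by linarith
  qed
  then show "\<exists>no. \<forall>n\<ge>no. norm (X n - a) < r" by blast
qed

lemma RC:
  fixes f :: "'a::euclidean_space \<Rightarrow> ereal"
  assumes ch: "chart M E U W \<phi> \<phi>'" and wb: "wb \<in> W" "\<phi> wb = xb"
    and r0: "r0 > 0" and PS: "\<And>z. z \<in> M \<inter> ball xb r0 \<Longrightarrow> partly_smooth_at f M z"
    and xbM: "xb \<in> M"
    and zri: "0 \<in> rel_interior (limiting_subdiff f xb)"
  shows "\<exists>\<delta>>0. \<exists>\<eta>>0. \<forall>y\<in>M \<inter> ball xb \<delta>. \<forall>w\<in>affine hull (limiting_subdiff f y).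
           norm w < \<eta> \<longrightarrow> w \<in> limiting_subdiff f y"
proof (rule ccontr)
  assume neg: "\<not> ?thesis"
  have "\<forall>k. \<exists>y w. y \<in> M \<and> norm (y - xb) < inverse (real (Suc k)) \<and> w \<in> affine hull (limiting_subdiff f y) \<and>
          norm (w - 0) < inverse (real (Suc k)) \<and> w \<notin> limiting_subdiff f y"
  proof
    fix k
    have p: "inverse (real (Suc k)) > 0" by simp
    from neg have "\<not> (\<forall>y\<in>M \<inter> ball xb (inverse (real (Suc k))). \<forall>w\<in>affine hull (limiting_subdiff f y).
           norm w < inverse (real (Suc k)) \<longrightarrow> w \<in> limiting_subdiff f y)"
      using p by blast
    then show "\<exists>y w. y \<in> M \<and> norm (y - xb) < inverse (real (Suc k)) \<and> w \<in> affine hull (limiting_subdiff f y) \<and>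
          norm (w - 0) < inverse (real (Suc k)) \<and> w \<notin> limiting_subdiff f y"
      by (auto simp: dist_norm norm_minus_commute)
  qed
  then obtain Y0 W0 where YW: "\<And>k. Y0 k \<in> M" "\<And>k. norm (Y0 k - xb) < inverse (real (Suc k))"
    "\<And>k. W0 k \<in> affine hull (limiting_subdiff f (Y0 k))" "\<And>k. norm (W0 k - 0) < inverse (real (Suc k))"
    "\<And>k. W0 k \<notin> limiting_subdiff f (Y0 k)"
    by metis
  have Y0lim: "Y0 \<longlonglongrightarrow> xb" using YW(2) by (rule seq_to)
  have W0lim: "W0 \<longlonglongrightarrow> 0" using YW(4) by (rule seq_to)
  obtain k0 where k0: "\<And>k. k \<ge> k0 \<Longrightarrow> norm (Y0 k - xb) < r0"
    using LIMSEQ_D[OF Y0lim r0] by blast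
  define Y where "Y k = Y0 (k + k0)" for k
  define Wv where "Wv k = W0 (k + k0)" for k
  have Ylim: "Y \<longlonglongrightarrow> xb" unfolding Y_def by (rule LIMSEQ_ignore_initial_segment[OF Y0lim])
  have Wlim: "Wv \<longlonglongrightarrow> 0" unfolding Wv_def by (rule LIMSEQ_ignore_initial_segment[OF W0lim])
  have YM: "Y k \<in> M" for k unfolding Y_def by (rule YW(1))
  have PSk: "partly_smooth_at f M (Y k)" for k
    using PS[of "Y k"] YM k0[of "k + k0"] unfolding Y_def by (auto simp: dist_norm norm_minus_commute)
  have "\<exists>d. d \<in> normal_space M (Y k) \<and> norm d = 1 \<and>
           (\<forall>v\<in>limiting_subdiff f (Y k). inner d v \<le> inner d (Wv k))" for k
  proof -
    note F = ps_facts[OF PSk[of k]]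
    have cv: "convex (limiting_subdiff f (Y k))" using frechet_convex F(2) by metis
    obtain d where "d \<in> par (limiting_subdiff f (Y k))" "norm d = 1"
      "\<And>v. v \<in> limiting_subdiff f (Y k) \<Longrightarrow> inner d v \<le> inner d (Wv k)"
      using sep_aff[OF cv F(3)] YW(3,5) unfolding Y_def Wv_def by metis
    then show ?thesis using F(5) by auto
  qed
  then obtain Dv where Dv: "\<And>k. Dv k \<in> normal_space M (Y k)" "\<And>k. norm (Dv k) = 1"
    "\<And>k v. v \<in> limiting_subdiff f (Y k) \<Longrightarrow> inner (Dv k) v \<le> inner (Dv k) (Wv k)"
    by metis
  have "\<forall>k. Dv k \<in> sphere 0 1" using Dv(2) by simp
  then obtain d \<sigma> where d: "d \<in> sphere 0 1" "strict_mono (\<sigma> :: nat \<Rightarrow> nat)" "(Dv \<circ> \<sigma>) \<longlonglongrightarrow> d"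
    using seq_compactE[OF compact_imp_seq_compact[OF compact_sphere]] by metis
  have nd: "norm d = 1" using d(1) by simp
  have Ys: "(Y \<circ> \<sigma>) \<longlonglongrightarrow> xb" by (rule LIMSEQ_subseq_LIMSEQ[OF Ylim d(2)])
  have Ws: "(Wv \<circ> \<sigma>) \<longlonglongrightarrow> 0" by (rule LIMSEQ_subseq_LIMSEQ[OF Wlim d(2)])
  note Fx = ps_facts[OF PS[of xb]]
  have xbin: "xb \<in> M \<inter> ball xb r0" using xbM r0 by auto
  note Fx = Fx[OF xbin]
  have dN: "d \<in> normal_space M xb"
    unfolding normal_space_def
  proof (intro CollectI ballI)
    fix u assume uT: "u \<in> tangent_space M xb"
    then obtain \<gamma> where cv: "curve_in M xb \<gamma> u" unfolding tangent_space_def by auto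
    obtain a where aE: "a \<in> E" and ua: "u = \<phi>' wb a"
      using chart_curve[OF ch wb(1)] cv wb(2) by metis
    have oU: "open U" and img: "\<phi> ` W = M \<inter> U" and inj: "inj_on \<phi> W"
      and cinv: "continuous_on (M \<inter> U) (inv_into W \<phi>)" and ca: "continuous_on W (\<lambda>z. \<phi>' z a)"
      using ch aE unfolding chart_def by auto
    have xbU: "xb \<in> M \<inter> U" using img wb by auto
    have evU: "eventually (\<lambda>k. (Y \<circ> \<sigma>) k \<in> M \<inter> U) sequentially"
    proof -
      have "eventually (\<lambda>k. (Y \<circ> \<sigma>) k \<in> U) sequentially"
        using topological_tendstoD[OF Ys oU] xbU by auto
      then show ?thesis using YM by (auto elim: eventually_mono)
    qed
    define wk where "wk k = inv_into W \<phi> ((Y \<circ> \<sigma>) k)" for k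
    have invxb: "inv_into W \<phi> xb = wb" using inj wb by (metis inv_into_f_f)
    have wlim: "wk \<longlonglongrightarrow> wb"
      using continuous_on_tendsto_compose[OF cinv Ys xbU evU] unfolding wk_def invxb .
    have evW: "eventually (\<lambda>k. wk k \<in> W \<and> \<phi> (wk k) = (Y \<circ> \<sigma>) k) sequentially"
      using evU
    proof (rule eventually_mono)
      fix k assume "(Y \<circ> \<sigma>) k \<in> M \<inter> U"
      then have "(Y \<circ> \<sigma>) k \<in> \<phi> ` W" using img by simp
      then show "wk k \<in> W \<and> \<phi> (wk k) = (Y \<circ> \<sigma>) k" unfolding wk_def
        by (auto intro: inv_into_into f_inv_into_f)
    qed
    have ulim: "(\<lambda>k. \<phi>' (wk k) a) \<longlonglongrightarrow> \<phi>' wb a"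
      by (rule continuous_on_tendsto_compose[OF ca wlim wb(1)]) (use evW in \<open>auto elim: eventually_mono\<close>)
    have ev0: "eventually (\<lambda>k. inner ((Dv \<circ> \<sigma>) k) (\<phi>' (wk k) a) = 0) sequentially"
      using evW
    proof (rule eventually_mono)
      fix k assume k: "wk k \<in> W \<and> \<phi> (wk k) = (Y \<circ> \<sigma>) k"
      have "\<phi>' (wk k) a \<in> tangent_space M (Y (\<sigma> k))"
        using chart_tangent_easy[OF ch _ aE, of "wk k"] k by auto
      then show "inner ((Dv \<circ> \<sigma>) k) (\<phi>' (wk k) a) = 0"
        using Dv(1)[of "\<sigma> k"] unfolding normal_space_def by auto
    qed
    have l1: "(\<lambda>k. inner ((Dv \<circ> \<sigma>) k) (\<phi>' (wk k) a)) \<longlonglongrightarrow> inner d (\<phi>' wb a)"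
      by (rule tendsto_inner[OF d(3) ulim])
    have l2: "(\<lambda>k. inner ((Dv \<circ> \<sigma>) k) (\<phi>' (wk k) a)) \<longlonglongrightarrow> 0"
      by (rule tendsto_eventually[OF ev0])
    show "inner d u = 0" using LIMSEQ_unique[OF l1 l2] ua by simp
  qed
  have dsep: "inner d y' \<le> 0" if y': "y' \<in> limiting_subdiff f xb" for y'
  proof -
    have "\<forall>k. (Y \<circ> \<sigma>) k \<in> M" using YM by simp
    then obtain V where V: "\<And>k. V k \<in> limiting_subdiff f ((Y \<circ> \<sigma>) k)" "V \<longlonglongrightarrow> y'"
      using Fx(6)[OF y' _ Ys] by blast
    have l1: "(\<lambda>k. inner ((Dv \<circ> \<sigma>) k) (V k)) \<longlonglongrightarrow> inner d y'"
      by (rule tendsto_inner[OF d(3) V(2)])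
    have l2: "(\<lambda>k. inner ((Dv \<circ> \<sigma>) k) ((Wv \<circ> \<sigma>) k)) \<longlonglongrightarrow> inner d 0"
      by (rule tendsto_inner[OF d(3) Ws])
    have "inner d y' \<le> inner d 0"
      by (rule tendsto_le[OF trivial_limit_sequentially l2 l1])
         (use Dv(3) V(1) in \<open>auto intro!: always_eventually\<close>)
    then show ?thesis by simp
  qed
  obtain e where e: "e > 0" "ball 0 e \<inter> affine hull (limiting_subdiff f xb) \<subseteq> limiting_subdiff f xb"
    using zri unfolding mem_rel_interior_ball by blast
  have z0: "0 \<in> limiting_subdiff f xb" using zri rel_interior_subset by blast
  have dpar: "d \<in> par (limiting_subdiff f xb)" using dN Fx(5) by simp
  have sp: "subspace (par (limiting_subdiff f xb))" using par_subspace[OF Fx(3)] .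
  define v where "v = (e / 2) *\<^sub>R d"
  have vpar: "v \<in> par (limiting_subdiff f xb)" unfolding v_def by (rule subspace_scale[OF sp dpar])
  have "0 + v \<in> affine hull (limiting_subdiff f xb)"
    by (rule aff_plus_par[OF _ vpar]) (use z0 in \<open>auto intro: hull_inc\<close>)
  moreover have "v \<in> ball 0 e" using e(1) nd unfolding v_def by simp
  ultimately have "v \<in> limiting_subdiff f xb" using e(2) by auto
  then have "inner d v \<le> 0" by (rule dsep)
  moreover have "inner d v = e / 2" unfolding v_def using nd by (simp add: power2_norm_eq_inner[symmetric])
  ultimately show False using e(1) by simp
qed


lemma norm2_deriv:
  fixes \<gamma> :: "real \<Rightarrow> 'a::euclidean_space"
  assumes d: "(\<gamma> has_vector_derivative u) (at 0)"
  shows "((\<lambda>t. (norm (\<gamma> t - z))\<^sup>2) has_real_derivative (2 * inner (\<gamma> 0 - z) u)) (at 0)"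
proof -
  have d1: "((\<lambda>t. \<gamma> t - z) has_derivative (\<lambda>h. h *\<^sub>R u)) (at 0)"
    using d unfolding has_vector_derivative_def by (auto intro!: derivative_eq_intros)
  have "((\<lambda>t. inner (\<gamma> t - z) (\<gamma> t - z)) has_derivative
          (\<lambda>h. inner (\<gamma> 0 - z) (h *\<^sub>R u) + inner (h *\<^sub>R u) (\<gamma> 0 - z))) (at 0)"
    by (rule has_derivative_inner[OF d1 d1])
  then have "((\<lambda>t. (norm (\<gamma> t - z))\<^sup>2) has_derivative (\<lambda>h. inner (\<gamma> 0 - z) (h *\<^sub>R u) + inner (h *\<^sub>R u) (\<gamma> 0 - z))) (at 0)"
    by (simp add: power2_norm_eq_inner)
  moreover have "(\<lambda>h. inner (\<gamma> 0 - z) (h *\<^sub>R u) + inner (h *\<^sub>R u) (\<gamma> 0 - z)) = (*) (2 * inner (\<gamma> 0 - z) u)"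
    by (auto simp: inner_commute algebra_simps)
  ultimately show ?thesis unfolding has_field_derivative_def by simp
qed

lemma PX:
  fixes f :: "'a::euclidean_space \<Rightarrow> ereal"
  assumes xbM: "xb \<in> M" and xbS: "xb \<in> argmin_set f" and fxb: "\<bar>f xb\<bar> \<noteq> \<infinity>"
    and r0: "r0 > 0" and PS: "\<And>z. z \<in> M \<inter> ball xb r0 \<Longrightarrow> partly_smooth_at f M z"
    and RCp: "\<delta>R > 0" "\<eta>R > 0" "\<forall>y\<in>M \<inter> ball xb \<delta>R. \<forall>w\<in>affine hull (limiting_subdiff f y).
           norm w < \<eta>R \<longrightarrow> w \<in> limiting_subdiff f y"
    and lam: "lam > 0"
  shows "\<exists>\<delta>>0. \<forall>z. norm (z - xb) < \<delta> \<longrightarrow> (\<exists>y\<in>M. norm (y - xb) \<le> 2 * norm (z - xb) \<and>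
      norm (z - y) \<le> norm (z - xb) \<and> (1 / lam) *\<^sub>R (z - y) \<in> frechet_subdiff f y \<and>
      real_of_ereal (f y) \<le> real_of_ereal (f xb) + (norm (z - xb))\<^sup>2 / (2 * lam))"
proof -
  have xbin: "xb \<in> M \<inter> ball xb r0" using xbM r0 by auto
  have rCx: "restricted_C1 f M xb" using ps_facts(4)[OF PS[OF xbin]] .
  obtain E U W \<phi> \<phi>' F' wb where ch: "chart M E U W \<phi> \<phi>'" and wb: "wb \<in> W" "\<phi> wb = xb"
    and fin: "\<And>w. w \<in> W \<Longrightarrow> \<bar>f (\<phi> w)\<bar> \<noteq> \<infinity>"
    and F': "\<And>w. w \<in> W \<Longrightarrow> ((\<lambda>w. real_of_ereal (f (\<phi> w))) has_derivative F' w) (at w within E)"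
    using rc_chart[OF rCx xbM] by metis
  define F where "F w = real_of_ereal (f (\<phi> w))" for w
  have E: "subspace E" and oU: "open U" and img: "\<phi> ` W = M \<inter> U" and inj: "inj_on \<phi> W"
    and cinv: "continuous_on (M \<inter> U) (inv_into W \<phi>)" and oW: "openin (top_of_set E) W"
    and d\<phi>: "\<And>w. w \<in> W \<Longrightarrow> (\<phi> has_derivative \<phi>' w) (at w within E)"
    using ch unfolding chart_def by auto
  have WE: "W \<subseteq> E" using chart_W_sub[OF ch] .
  have contF: "continuous_on W F"
  proof (rule has_derivative_continuous_on[of _ _ F'])
    fix x assume x: "x \<in> W"
    have Fe: "F = (\<lambda>w. real_of_ereal (f (\<phi> w)))" by (simp add: F_def fun_eq_iff)
    show "(F has_derivative F' x) (at x within W)"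
      unfolding Fe by (rule has_derivative_subset[OF F'[OF x] WE])
  qed
  have cont\<phi>: "continuous_on W \<phi>"
  proof (rule has_derivative_continuous_on[of _ _ \<phi>'])
    fix x assume x: "x \<in> W"
    show "(\<phi> has_derivative \<phi>' x) (at x within W)"
      by (rule has_derivative_subset[OF d\<phi>[OF x] WE])
  qed
  obtain r1 where r1: "r1 > 0" "ball wb r1 \<inter> E \<subseteq> W"
    using oW wb(1) unfolding openin_contains_ball by blast
  define K where "K = cball wb (r1 / 2) \<inter> E"
  have Kc: "compact K" unfolding K_def using closed_subspace[OF E] by (intro compact_Int_closed) auto
  have KW: "K \<subseteq> W" using r1 unfolding K_def by (auto simp: subset_iff)
  have wbK: "wb \<in> K" using wb(1) WE r1(1) unfolding K_def by auto
  have xbU: "xb \<in> M \<inter> U" using img wb by auto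
  have invxb: "inv_into W \<phi> xb = wb" using inj wb by (metis inv_into_f_f)
  obtain \<rho>a where \<rho>a: "\<rho>a > 0" "\<forall>y\<in>M \<inter> U. dist y xb < \<rho>a \<longrightarrow> dist (inv_into W \<phi> y) wb < r1 / 2"
    using cinv xbU r1(1) unfolding continuous_on_iff invxb[symmetric]
    by (metis half_gt_zero)
  obtain \<rho>b where \<rho>b: "\<rho>b > 0" "ball xb \<rho>b \<subseteq> U" using oU xbU open_contains_ball by blast
  define \<rho> where "\<rho> = min (min \<rho>a \<rho>b) (min r0 \<delta>R)"
  have \<rho>: "\<rho> > 0" "\<rho> \<le> \<rho>a" "\<rho> \<le> \<rho>b" "\<rho> \<le> r0" "\<rho> \<le> \<delta>R"
    using \<rho>a \<rho>b r0 RCp(1) unfolding \<rho>_def by auto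
  have inK: "inv_into W \<phi> y \<in> K \<and> \<phi> (inv_into W \<phi> y) = y" if y: "y \<in> M" "norm (y - xb) < \<rho>" for y
  proof -
    have "y \<in> U" using \<rho>b(2) \<rho>(3) y(2) by (auto simp: dist_norm norm_minus_commute subset_iff)
    then have yMU: "y \<in> M \<inter> U" using y(1) by auto
    then have "y \<in> \<phi> ` W" using img by simp
    then have iW: "inv_into W \<phi> y \<in> W" "\<phi> (inv_into W \<phi> y) = y" by (auto intro: inv_into_into f_inv_into_f)
    have "dist (inv_into W \<phi> y) wb < r1 / 2" using \<rho>a(2) yMU y(2) \<rho>(2) by (auto simp: dist_norm)
    then show ?thesis using iW WE unfolding K_def by (auto simp: dist_commute)
  qed
  define \<delta> where "\<delta> = min (\<rho> / 2) (lam * \<eta>R)"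
  have \<delta>: "\<delta> > 0" using \<rho>(1) lam RCp(2) unfolding \<delta>_def by auto
  have "\<exists>y\<in>M. norm (y - xb) \<le> 2 * norm (z - xb) \<and>
      norm (z - y) \<le> norm (z - xb) \<and> (1 / lam) *\<^sub>R (z - y) \<in> frechet_subdiff f y \<and>
      real_of_ereal (f y) \<le> real_of_ereal (f xb) + (norm (z - xb))\<^sup>2 / (2 * lam)"
    if z: "norm (z - xb) < \<delta>" for z
  proof -
    define h where "h y = real_of_ereal (f y) + (norm (y - z))\<^sup>2 / (2 * lam)" for y
    define H where "H w = h (\<phi> w)" for w
    have contH: "continuous_on K H"
    proof -
      have "continuous_on K F" "continuous_on K \<phi>"
        using continuous_on_subset[OF contF KW] continuous_on_subset[OF cont\<phi> KW] by auto
      then show ?thesis unfolding H_def h_def F_def[symmetric]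
        by (intro continuous_intros) (use lam in \<open>auto simp: F_def\<close>)
    qed
    obtain ws where ws: "ws \<in> K" "\<And>w. w \<in> K \<Longrightarrow> H ws \<le> H w"
      using continuous_attains_inf[OF Kc _ contH] wbK by blast
    define y where "y = \<phi> ws"
    have wsW: "ws \<in> W" using ws(1) KW by auto
    have yM: "y \<in> M" using img wsW unfolding y_def by auto
    have fyfin: "\<bar>f y\<bar> \<noteq> \<infinity>" using fin[OF wsW] unfolding y_def .
    have "f xb \<le> f y" using xbS unfolding argmin_set_def by auto
    then have fle: "real_of_ereal (f xb) \<le> real_of_ereal (f y)"
      using fxb fyfin by (cases "f xb"; cases "f y") auto
    have Hle: "h y \<le> h xb" using ws(2)[OF wbK] wb(2) unfolding H_def y_def by simp
    have l2: "lam * 2 > 0" using lam by simp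
    have sq: "(norm (y - z))\<^sup>2 \<le> (norm (xb - z))\<^sup>2"
    proof -
      have "(norm (y - z))\<^sup>2 / (2 * lam) \<le> (norm (xb - z))\<^sup>2 / (2 * lam)"
        using Hle fle unfolding h_def by linarith
      then show ?thesis using lam by (simp add: divide_right_mono_neg field_simps)
    qed
    have nyz: "norm (z - y) \<le> norm (z - xb)"
      using power2_le_imp_le[OF sq] by (simp add: norm_minus_commute)
    have fyb: "real_of_ereal (f y) \<le> real_of_ereal (f xb) + (norm (z - xb))\<^sup>2 / (2 * lam)"
    proof -
      have "0 \<le> (norm (y - z))\<^sup>2 / (2 * lam)" using lam by simp
      then show ?thesis using Hle unfolding h_def by (simp add: norm_minus_commute)
    qed
    have nyx: "norm (y - xb) \<le> 2 * norm (z - xb)"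
    proof -
      have "norm (y - xb) \<le> norm (y - z) + norm (z - xb)" using norm_triangle_ineq[of "y - z" "z - xb"] by simp
      then show ?thesis using nyz by (simp add: norm_minus_commute)
    qed
    have yr: "norm (y - xb) < \<rho>" using nyx z unfolding \<delta>_def by linarith
    have yin: "y \<in> M \<inter> ball xb r0" "y \<in> M \<inter> ball xb \<delta>R"
      using yM yr \<rho> by (auto simp: dist_norm norm_minus_commute)
    note Fy = ps_facts[OF PS[OF yin(1)]]
    have lmin: "h y \<le> h y'" if "y' \<in> M" "norm (y' - xb) < \<rho>" for y'
    proof -
      have "inv_into W \<phi> y' \<in> K" "\<phi> (inv_into W \<phi> y') = y'" using inK[OF that] by auto
      then show ?thesis using ws(2)[of "inv_into W \<phi> y'"] unfolding H_def y_def by simp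
    qed
    define wv where "wv = (1 / lam) *\<^sub>R (z - y)"
    define g where "g = riem_grad f M y"
    have G: "\<forall>\<gamma> u. curve_in M y \<gamma> u \<longrightarrow>
        ((\<lambda>t. real_of_ereal (f (\<gamma> t))) has_real_derivative (inner g u)) (at 0)"
      using grad_char[OF Fy(4) yM] unfolding g_def by blast
    have orth: "inner (g - wv) u = 0" if uT: "u \<in> tangent_space M y" for u
    proof -
      obtain \<gamma> where cv: "curve_in M y \<gamma> u" using uT unfolding tangent_space_def by auto
      have \<gamma>0: "\<gamma> 0 = y" using cv unfolding curve_in_def by auto
      obtain e where e: "e > 0" "\<And>t. \<bar>t\<bar> < e \<Longrightarrow> \<gamma> t \<in> M" using cv unfolding curve_in_def by auto
      have dv: "(\<gamma> has_vector_derivative u) (at 0)" using cv unfolding curve_in_def by auto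
      have D: "((\<lambda>t. h (\<gamma> t)) has_real_derivative (inner g u + 2 * inner (y - z) u / (2 * lam))) (at 0)"
        unfolding h_def
        using DERIV_add[OF G[rule_format, OF cv] DERIV_cdivide[OF norm2_deriv[OF dv, of z], of "2 * lam"]]
        unfolding \<gamma>0 .
      obtain d1 where d1: "d1 > 0" "\<forall>t. norm (t - 0) < d1 \<longrightarrow> norm (\<gamma> t - \<gamma> 0 - (t - 0) *\<^sub>R u) \<le> 1 * norm (t - 0)"
        using dv unfolding has_vector_derivative_def has_derivative_within_alt
        by (metis zero_less_one UNIV_I)
      have nu: "norm u + 1 > 0" by (simp add: add_nonneg_pos)
      define d where "d = min (min e d1) ((\<rho> - norm (y - xb)) / (norm u + 1))"
      have dpos: "d > 0" unfolding d_def using e(1) d1(1) yr nu by auto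
      have loc: "h (\<gamma> 0) \<le> h (\<gamma> t)" if t: "\<bar>0 - t\<bar> < d" for t
      proof -
        have tt: "\<bar>t\<bar> < e" "\<bar>t\<bar> < d1" "\<bar>t\<bar> < (\<rho> - norm (y - xb)) / (norm u + 1)" using t unfolding d_def by auto
        have "norm (\<gamma> t - y) \<le> norm (\<gamma> t - y - t *\<^sub>R u) + norm (t *\<^sub>R u)"
          by (metis diff_add_cancel norm_triangle_ineq)
        also have "\<dots> \<le> \<bar>t\<bar> + \<bar>t\<bar> * norm u" using d1(2) tt(2) \<gamma>0 by (auto dest!: spec[of _ t])
        also have "\<dots> = (norm u + 1) * \<bar>t\<bar>" by (simp add: algebra_simps)
        also have "\<dots> < \<rho> - norm (y - xb)" using tt(3) nu by (simp add: field_simps)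
        finally have "norm (\<gamma> t - y) < \<rho> - norm (y - xb)" .
        moreover have "norm (\<gamma> t - xb) \<le> norm (\<gamma> t - y) + norm (y - xb)"
          using norm_triangle_ineq[of "\<gamma> t - y" "y - xb"] by simp
        ultimately have "norm (\<gamma> t - xb) < \<rho>" by linarith
        then show ?thesis using lmin[OF e(2)[OF tt(1)]] \<gamma>0 by simp
      qed
      have "inner g u + 2 * inner (y - z) u / (2 * lam) = 0"
        by (rule DERIV_local_min[OF D dpos]) (use loc in auto)
      moreover have "inner (g - wv) u = inner g u + 2 * inner (y - z) u / (2 * lam)"
        unfolding wv_def using lam by (simp add: inner_diff_left inner_add_left inner_diff_right field_simps)
      ultimately show ?thesis by simp
    qed
    obtain v where v: "v \<in> limiting_subdiff f y" using Fy(3) by blast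
    have vF: "v \<in> frechet_subdiff f y" using v Fy(2) by simp
    have vg: "v - g \<in> normal_space M y" using frechet_normal[OF Fy(4) yM vF] unfolding g_def .
    have "wv - v \<in> normal_space M y"
      unfolding normal_space_def
    proof (intro CollectI ballI)
      fix u assume uT: "u \<in> tangent_space M y"
      have "inner (v - g) u = 0" using vg uT unfolding normal_space_def by auto
      then show "inner (wv - v) u = 0" using orth[OF uT] by (simp add: inner_diff_left)
    qed
    then have "wv - v \<in> par (limiting_subdiff f y)" using Fy(5) by simp
    from aff_plus_par[OF _ this, of v] have "wv \<in> affine hull (limiting_subdiff f y)"
      using v by (auto intro: hull_inc)
    moreover have "norm wv < \<eta>R"
    proof -
      have "norm wv = norm (z - y) / lam" unfolding wv_def using lam by simp
      also have "\<dots> \<le> norm (z - xb) / lam" using nyz lam by (simp add: divide_right_mono)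
      also have "\<dots> < \<eta>R" using z lam unfolding \<delta>_def by (simp add: field_simps)
      finally show ?thesis .
    qed
    ultimately have "wv \<in> limiting_subdiff f y" using RCp(3) yin(2) by blast
    then have "wv \<in> frechet_subdiff f y" using Fy(2) by simp
    then show ?thesis using yM nyx nyz fyb unfolding wv_def by blast
  qed
  then show ?thesis using \<delta> by blast
qed


lemma prox_lim:
  fixes f :: "'a::euclidean_space \<Rightarrow> ereal"
  assumes pr: "\<forall>x' x'' v. x' \<in> ball xb e \<and> x'' \<in> ball xb e \<and> v \<in> frechet_subdiff f x' \<and> norm (v - 0) < e \<and>
      f x' < f xb + ereal e \<longrightarrow>
      ereal (real_of_ereal (f x') + inner v (x'' - x') - \<rho> / 2 * (norm (x'' - x'))\<^sup>2) \<le> f x''"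
    and x': "x' \<in> ball xb e" and x'': "x'' \<in> ball xb e" and v: "v \<in> limiting_subdiff f x'"
    and nv: "norm v < e" and fx': "f x' < f xb + ereal e"
  shows "ereal (real_of_ereal (f x') + inner v (x'' - x') - \<rho> / 2 * (norm (x'' - x'))\<^sup>2) \<le> f x''"
proof -
  have vv: "\<bar>f x'\<bar> \<noteq> \<infinity> \<and> (\<exists>X V. X \<longlonglongrightarrow> x' \<and> (\<lambda>k. f (X k)) \<longlonglongrightarrow> f x' \<and>
            (\<forall>k. V k \<in> frechet_subdiff f (X k)) \<and> V \<longlonglongrightarrow> v)"
    using v unfolding limiting_subdiff_def by (rule CollectD)
  then have fin: "\<bar>f x'\<bar> \<noteq> \<infinity>" by (rule conjunct1)
  from vv obtain X V where XV1: "X \<longlonglongrightarrow> x'" and XV2: "(\<lambda>k. f (X k)) \<longlonglongrightarrow> f x'"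
    and XV3: "\<forall>k. V k \<in> frechet_subdiff f (X k)" and XV4: "V \<longlonglongrightarrow> v"
    by (elim conjE exE)
  have XV3': "\<And>k. V k \<in> frechet_subdiff f (X k)" using XV3 by blast
  note XV = XV1 XV2 XV3' XV4
  obtain r where r: "f x' = ereal r" using fin by (cases "f x'") auto
  have ev1: "eventually (\<lambda>k. X k \<in> ball xb e) sequentially"
    using topological_tendstoD[OF XV(1) open_ball x'] .
  have ev2: "eventually (\<lambda>k. norm (V k - 0) < e) sequentially"
    using order_tendstoD(2)[OF tendsto_norm[OF XV(4)] nv] by simp
  have ev3: "eventually (\<lambda>k. f (X k) < f xb + ereal e) sequentially"
    using order_tendstoD(2)[OF XV(2) fx'] .
  have evI: "eventually (\<lambda>k. ereal (real_of_ereal (f (X k)) + inner (V k) (x'' - X k) - \<rho> / 2 * (norm (x'' - X k))\<^sup>2) \<le> f x'') sequentially"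
    using ev1 ev2 ev3
  proof eventually_elim
    case (elim k)
    then show ?case using pr x'' XV(3)[of k] by blast
  qed
  have rl: "(\<lambda>k. real_of_ereal (f (X k))) \<longlonglongrightarrow> r" using XV(2) unfolding r by (rule lim_real_of_ereal)
  have lim: "(\<lambda>k. ereal (real_of_ereal (f (X k)) + inner (V k) (x'' - X k) - \<rho> / 2 * (norm (x'' - X k))\<^sup>2))
      \<longlonglongrightarrow> ereal (r + inner v (x'' - x') - \<rho> / 2 * (norm (x'' - x'))\<^sup>2)"
  proof -
    have "(\<lambda>k. real_of_ereal (f (X k)) + inner (V k) (x'' - X k) - \<rho> / 2 * (norm (x'' - X k))\<^sup>2)
      \<longlonglongrightarrow> r + inner v (x'' - x') - \<rho> / 2 * (norm (x'' - x'))\<^sup>2"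
      by (intro tendsto_diff tendsto_add tendsto_mult tendsto_power tendsto_norm tendsto_inner
          tendsto_const rl XV(1) XV(4))
    then show ?thesis by (rule tendsto_ereal)
  qed
  have "ereal (r + inner v (x'' - x') - \<rho> / 2 * (norm (x'' - x'))\<^sup>2) \<le> f x''"
    by (rule tendsto_le[OF trivial_limit_sequentially tendsto_const lim evI])
  then show ?thesis using r by simp
qed

lemma ID:
  fixes f :: "'a::euclidean_space \<Rightarrow> ereal"
  assumes sc: "subdiff_continuous_at f xb" and z0: "0 \<in> limiting_subdiff f xb" and fxb: "\<bar>f xb\<bar> \<noteq> \<infinity>"
    and e: "e > 0" and \<rho>: "\<rho> \<ge> 0"
    and pr: "\<forall>x' x'' v. x' \<in> ball xb e \<and> x'' \<in> ball xb e \<and> v \<in> frechet_subdiff f x' \<and> norm (v - 0) < e \<and>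
      f x' < f xb + ereal e \<longrightarrow>
      ereal (real_of_ereal (f x') + inner v (x'' - x') - \<rho> / 2 * (norm (x'' - x'))\<^sup>2) \<le> f x''"
    and PXr: "\<exists>\<delta>>0. \<forall>z. norm (z - xb) < \<delta> \<longrightarrow> (\<exists>y\<in>M. norm (y - xb) \<le> 2 * norm (z - xb) \<and>
      norm (z - y) \<le> norm (z - xb) \<and> (1 / (1 / (\<rho> + 1))) *\<^sub>R (z - y) \<in> frechet_subdiff f y \<and>
      real_of_ereal (f y) \<le> real_of_ereal (f xb) + (norm (z - xb))\<^sup>2 / (2 * (1 / (\<rho> + 1))))"
  shows "\<exists>\<epsilon>>0. \<exists>\<delta>>0. \<forall>x\<in>ball xb \<epsilon>. \<forall>v\<in>limiting_subdiff f x. norm v < \<delta> \<longrightarrow> x \<in> M"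
proof (rule ccontr)
  assume neg: "\<not> ?thesis"
  have "\<forall>k. \<exists>x v. norm (x - xb) < inverse (real (Suc k)) \<and> v \<in> limiting_subdiff f x \<and>
          norm (v - 0) < inverse (real (Suc k)) \<and> x \<notin> M"
  proof
    fix k
    have p: "inverse (real (Suc k)) > 0" by simp
    from neg have "\<not> (\<forall>x\<in>ball xb (inverse (real (Suc k))). \<forall>v\<in>limiting_subdiff f x.
           norm v < inverse (real (Suc k)) \<longrightarrow> x \<in> M)"
      using p by blast
    then obtain x v where "x \<in> ball xb (inverse (real (Suc k)))" "v \<in> limiting_subdiff f x"
      "norm v < inverse (real (Suc k))" "x \<notin> M" by blast
    then show "\<exists>x v. norm (x - xb) < inverse (real (Suc k)) \<and> v \<in> limiting_subdiff f x \<and>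
          norm (v - 0) < inverse (real (Suc k)) \<and> x \<notin> M"
      by (intro exI[of _ x] exI[of _ v]) (simp add: dist_norm norm_minus_commute)
  qed
  then obtain X V where XV: "\<And>k. norm (X k - xb) < inverse (real (Suc k))" "\<And>k. V k \<in> limiting_subdiff f (X k)"
    "\<And>k. norm (V k - 0) < inverse (real (Suc k))" "\<And>k. X k \<notin> M"
    by metis
  have Xl: "X \<longlonglongrightarrow> xb" using XV(1) by (rule seq_to)
  have Vl: "V \<longlonglongrightarrow> 0" using XV(3) by (rule seq_to)
  have fl: "(\<lambda>k. f (X k)) \<longlonglongrightarrow> f xb"
  proof -
    have "X \<longlonglongrightarrow> xb \<and> (\<forall>k. V k \<in> limiting_subdiff f (X k)) \<and> V \<longlonglongrightarrow> 0 \<and> 0 \<in> limiting_subdiff f xb"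
      using Xl XV(2) Vl z0 by blast
    then show ?thesis using sc[unfolded subdiff_continuous_at_def, rule_format, of X V 0] by blast
  qed
  define lam where "lam = 1 / (\<rho> + 1)"
  have lam: "lam > 0" "(\<rho> + 1) * lam = 1" using \<rho> unfolding lam_def by auto
  obtain \<delta>P where \<delta>P: "\<delta>P > 0" "\<And>z. norm (z - xb) < \<delta>P \<Longrightarrow> (\<exists>y\<in>M. norm (y - xb) \<le> 2 * norm (z - xb) \<and>
      norm (z - y) \<le> norm (z - xb) \<and> (1 / lam) *\<^sub>R (z - y) \<in> frechet_subdiff f y \<and>
      real_of_ereal (f y) \<le> real_of_ereal (f xb) + (norm (z - xb))\<^sup>2 / (2 * lam))"
    using PXr unfolding lam_def by blast
  define Z where "Z k = X k + lam *\<^sub>R V k" for k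
  have Zl: "Z \<longlonglongrightarrow> xb" unfolding Z_def using tendsto_add[OF Xl tendsto_scaleR[OF tendsto_const Vl]] by simp
  define \<eta> where "\<eta> = min (min \<delta>P (e / 2)) (min (lam * e) (min 1 (2 * lam * e)))"
  have \<eta>: "\<eta> > 0" using \<delta>P(1) e lam unfolding \<eta>_def by auto
  obtain r where r: "f xb = ereal r" using fxb by (cases "f xb") auto
  have ev1: "eventually (\<lambda>k. X k \<in> ball xb e) sequentially"
    using topological_tendstoD[OF Xl open_ball] e by simp
  have ev2: "eventually (\<lambda>k. norm (V k - 0) < e) sequentially"
    using order_tendstoD(2)[OF tendsto_norm_zero[OF Vl] e] by simp
  have ev3: "eventually (\<lambda>k. f (X k) < f xb + ereal e) sequentially"
    using order_tendstoD(2)[OF fl] e r by simp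
  have ev4: "eventually (\<lambda>k. norm (Z k - xb) < \<eta>) sequentially"
    using order_tendstoD(2)[OF tendsto_norm_zero[OF LIM_zero[OF Zl]] \<eta>] by simp
  have "eventually (\<lambda>k. X k \<in> ball xb e \<and> norm (V k - 0) < e \<and> f (X k) < f xb + ereal e \<and> norm (Z k - xb) < \<eta>) sequentially"
    by (intro eventually_conj ev1 ev2 ev3 ev4)
  then obtain N where N: "\<And>n. n \<ge> N \<Longrightarrow> X n \<in> ball xb e \<and> norm (V n - 0) < e \<and> f (X n) < f xb + ereal e \<and> norm (Z n - xb) < \<eta>"
    unfolding eventually_sequentially by blast
  define k where "k = N"
  have kN: "X k \<in> ball xb e \<and> norm (V k - 0) < e \<and> f (X k) < f xb + ereal e \<and> norm (Z k - xb) < \<eta>"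
    unfolding k_def by (rule N) simp
  have k1: "X k \<in> ball xb e" using kN by blast
  have k2: "norm (V k - 0) < e" using kN by blast
  have k3: "f (X k) < f xb + ereal e" using kN by blast
  have k4: "norm (Z k - xb) < \<eta>" using kN by blast
  note k = k1 k2 k3 k4
  define x where "x = X k"
  define v where "v = V k"
  define z where "z = Z k"
  have nz: "norm (z - xb) < \<delta>P" "norm (z - xb) < e / 2" "norm (z - xb) < lam * e"
    "norm (z - xb) < 1" "norm (z - xb) < 2 * lam * e"
  proof -
    have "\<eta> \<le> \<delta>P" "\<eta> \<le> e / 2" "\<eta> \<le> lam * e" "\<eta> \<le> 1" "\<eta> \<le> 2 * lam * e"
      unfolding \<eta>_def by (simp_all add: min_le_iff_disj)
    then show "norm (z - xb) < \<delta>P" "norm (z - xb) < e / 2" "norm (z - xb) < lam * e"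
      "norm (z - xb) < 1" "norm (z - xb) < 2 * lam * e" using k(4) unfolding z_def by linarith+
  qed
  obtain y where y: "y \<in> M" "norm (y - xb) \<le> 2 * norm (z - xb)" "norm (z - y) \<le> norm (z - xb)"
    "(1 / lam) *\<^sub>R (z - y) \<in> frechet_subdiff f y"
    "real_of_ereal (f y) \<le> real_of_ereal (f xb) + (norm (z - xb))\<^sup>2 / (2 * lam)"
    using \<delta>P(2)[OF nz(1)] by (elim bexE conjE) (rule that, assumption+)
  define w where "w = (1 / lam) *\<^sub>R (z - y)"
  have fyfin: "\<bar>f y\<bar> \<noteq> \<infinity>" using y(4) unfolding frechet_subdiff_def by auto
  obtain s where s: "f y = ereal s" using fyfin by (cases "f y") auto
  have fxfin: "\<bar>f x\<bar> \<noteq> \<infinity>" using limiting_finite[OF XV(2)[of k]] unfolding x_def .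
  obtain q where q: "f x = ereal q" using fxfin by (cases "f x") auto
  have yb: "y \<in> ball xb e" using y(2) nz(2) by (simp add: dist_norm norm_minus_commute)
  have xb': "x \<in> ball xb e" using k(1) unfolding x_def .
  have nw: "norm (w - 0) < e"
  proof -
    have "norm w = norm (z - y) / lam" unfolding w_def using lam by simp
    also have "\<dots> \<le> norm (z - xb) / lam" using y(3) lam by (simp add: divide_right_mono)
    also have "\<dots> < e" using nz(3) lam by (simp add: field_simps)
    finally show ?thesis by simp
  qed
  have fyl: "f y < f xb + ereal e"
  proof -
    have "(norm (z - xb))\<^sup>2 \<le> norm (z - xb)" using nz(4) by (simp add: power2_eq_square mult_left_le_one_le)
    then have "(norm (z - xb))\<^sup>2 / (2 * lam) < e" using nz(5) lam by (simp add: field_simps)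
    then show ?thesis using y(5) s r by simp
  qed
  have P1: "ereal (real_of_ereal (f y) + inner w (x - y) - \<rho> / 2 * (norm (x - y))\<^sup>2) \<le> f x"
    using pr yb xb' y(4) nw fyl unfolding w_def by blast
  have P2: "ereal (real_of_ereal (f x) + inner v (y - x) - \<rho> / 2 * (norm (y - x))\<^sup>2) \<le> f y"
    by (rule prox_lim[OF pr xb' yb]) (use XV(2)[of k] k(2,3) in \<open>auto simp: x_def v_def\<close>)
  have R1: "s + inner w (x - y) - \<rho> / 2 * (norm (x - y))\<^sup>2 \<le> q" using P1 s q by simp
  have R2: "q + inner v (y - x) - \<rho> / 2 * (norm (x - y))\<^sup>2 \<le> s" using P2 s q by (simp add: norm_minus_commute)
  have zx: "z = x + lam *\<^sub>R v" unfolding z_def x_def v_def Z_def by simp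
  have wexp: "inner w (x - y) = (\<rho> + 1) * (norm (x - y))\<^sup>2 + inner v (x - y)"
  proof -
    have il: "1 / lam = \<rho> + 1" using \<rho> unfolding lam_def by simp
    have zy: "z - y = (x - y) + lam *\<^sub>R v" using zx by simp
    have "w = (\<rho> + 1) *\<^sub>R ((x - y) + lam *\<^sub>R v)" unfolding w_def il zy ..
    then have "w = (\<rho> + 1) *\<^sub>R (x - y) + ((\<rho> + 1) * lam) *\<^sub>R v"
      by (simp only: scaleR_add_right scaleR_scaleR)
    then have "w = (\<rho> + 1) *\<^sub>R (x - y) + v" using lam(2) by simp
    then show ?thesis by (simp add: inner_add_left power2_norm_eq_inner)
  qed
  have "inner v (y - x) = - inner v (x - y)" by (simp add: inner_diff_right)
  then have "(\<rho> + 1) * (norm (x - y))\<^sup>2 \<le> \<rho> * (norm (x - y))\<^sup>2" using R1 R2 wexp by simp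
  then have "(norm (x - y))\<^sup>2 \<le> 0" by (simp add: algebra_simps)
  then have "x = y" by simp
  then show False using XV(4)[of k] y(1) unfolding x_def by simp
qed


lemma infdist_lb:
  assumes "A \<noteq> {}" "\<And>a. a \<in> A \<Longrightarrow> L \<le> dist x a"
  shows "L \<le> infdist x A"
  unfolding infdist_notempty[OF assms(1)] by (rule cINF_greatest[OF assms(1) assms(2)])

lemma infdist_approx:
  assumes "A \<noteq> {}" "infdist x A < d"
  obtains a where "a \<in> A" "dist x a < d"
proof -
  have bdd: "bdd_below ((\<lambda>a. dist x a) ` A)" by (rule bdd_belowI[of _ 0]) auto
  have "(INF a\<in>A. dist x a) < d" using assms(2) unfolding infdist_notempty[OF assms(1)] .
  then have "\<exists>a\<in>A. dist x a < d" using cINF_less_iff[OF assms(1) bdd] by metis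
  then show ?thesis using that by blast
qed

theorem theorem6:
  fixes f :: "'a::euclidean_space \<Rightarrow> ereal" and M :: "'a set" and xbar :: 'a
  assumes "proper_fun f" and "closed_fun f"
    and "argmin_set f \<noteq> {}"
    and "xbar \<in> argmin_set f"
    and "C1_submanifold M" and "xbar \<in> M"
    and "partly_smooth_around f M xbar"
    and "prox_regular_around f M xbar"
    and "0 \<in> rel_interior (limiting_subdiff f xbar)"
    and "subdiff_continuous_at f xbar"
  shows "(\<exists>\<epsilon>>0. \<exists>\<mu>>0. \<forall>x\<in>ball xbar \<epsilon>.
            ereal (\<mu> * infdist x (argmin_set f)) \<le> dist0 (limiting_subdiff f x))
     \<longleftrightarrow> (\<exists>\<epsilon>>0. \<exists>\<mu>>0. \<forall>x\<in>ball xbar \<epsilon> \<inter> M.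
            \<mu> * infdist x (argmin_set f \<inter> M) \<le> norm (riem_grad f M x))"
proof -
  note xbS = assms(4) and xbM = assms(6) and PSa = assms(7) and PRa = assms(8)
    and zri = assms(9) and sc = assms(10)
  define S where "S = argmin_set f"
  obtain r0 where r0: "r0 > 0" "\<forall>z\<in>M \<inter> ball xbar r0. partly_smooth_at f M z"
    using PSa unfolding partly_smooth_around_def by blast
  have PS: "partly_smooth_at f M z" if "z \<in> M \<inter> ball xbar r0" for z using r0(2) that by blast
  have xbin: "xbar \<in> M \<inter> ball xbar r0" using xbM r0(1) by auto
  note Fx = ps_facts[OF PS[OF xbin]]
  have z0: "0 \<in> limiting_subdiff f xbar" using zri rel_interior_subset by blast
  have fxb: "\<bar>f xbar\<bar> \<noteq> \<infinity>" by (rule limiting_finite[OF z0])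
  obtain E U W \<phi> \<phi>' F' wb where ch: "chart M E U W \<phi> \<phi>'" and wb: "wb \<in> W" "\<phi> wb = xbar"
    using rc_chart[OF Fx(4) xbM] by metis
  obtain \<delta>R \<eta>R where RCp: "\<delta>R > 0" "\<eta>R > 0" "\<forall>y\<in>M \<inter> ball xbar \<delta>R. \<forall>w\<in>affine hull (limiting_subdiff f y).
           norm w < \<eta>R \<longrightarrow> w \<in> limiting_subdiff f y"
    using RC[OF ch wb r0(1) PS xbM zri] by blast
  obtain rp where rp: "rp > 0" "\<forall>z\<in>M \<inter> ball xbar rp. \<forall>v\<in>limiting_subdiff f z. prox_regular_at f z v"
    using PRa unfolding prox_regular_around_def by blast
  have "prox_regular_at f xbar 0" using rp z0 xbM by auto
  then obtain e \<rho> where e: "e > 0" and \<rho>: "\<rho> \<ge> 0" and pr: "\<forall>x' x'' v.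
      x' \<in> ball xbar e \<and> x'' \<in> ball xbar e \<and> v \<in> frechet_subdiff f x' \<and> norm (v - 0) < e \<and>
      f x' < f xbar + ereal e \<longrightarrow>
      ereal (real_of_ereal (f x') + inner v (x'' - x') - \<rho> / 2 * (norm (x'' - x'))\<^sup>2) \<le> f x''"
    unfolding prox_regular_at_def by blast
  have lam: "1 / (\<rho> + 1) > 0" using \<rho> by simp
  have PXr: "\<exists>\<delta>>0. \<forall>z. norm (z - xbar) < \<delta> \<longrightarrow> (\<exists>y\<in>M. norm (y - xbar) \<le> 2 * norm (z - xbar) \<and>
      norm (z - y) \<le> norm (z - xbar) \<and> (1 / (1 / (\<rho> + 1))) *\<^sub>R (z - y) \<in> frechet_subdiff f y \<and>
      real_of_ereal (f y) \<le> real_of_ereal (f xbar) + (norm (z - xbar))\<^sup>2 / (2 * (1 / (\<rho> + 1))))"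
    by (rule PX[OF xbM xbS fxb r0(1) PS RCp lam])
  obtain \<epsilon>I \<delta>I where ID: "\<epsilon>I > 0" "\<delta>I > 0"
    "\<forall>x\<in>ball xbar \<epsilon>I. \<forall>v\<in>limiting_subdiff f x. norm v < \<delta>I \<longrightarrow> x \<in> M"
    using ID[OF sc z0 fxb e \<rho> pr PXr] by blast
  have xbSM: "xbar \<in> S \<inter> M" using xbS xbM unfolding S_def by auto
  have SM: "s \<in> M" if s: "s \<in> S" "norm (s - xbar) < \<epsilon>I" for s
  proof -
    have "f s \<le> f xbar" "f xbar \<le> f s" using s(1) xbS unfolding S_def argmin_set_def by auto
    then have "f s = f xbar" by simp
    then have "\<bar>f s\<bar> \<noteq> \<infinity>" using fxb by simp
    then have "0 \<in> frechet_subdiff f s" by (rule zero_frechet_argmin[OF s(1)[unfolded S_def]])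
    then have "0 \<in> limiting_subdiff f s" using frechet_sub_limiting by blast
    moreover have "s \<in> ball xbar \<epsilon>I" using s(2) by (simp add: dist_norm norm_minus_commute)
    ultimately show ?thesis using ID(2,3) by (metis norm_zero)
  qed
  have infd: "infdist x (S \<inter> M) \<le> infdist x S" if x: "norm (x - xbar) < \<epsilon>I / 2" for x
  proof (rule field_le_epsilon)
    fix \<eta> :: real assume \<eta>: "\<eta> > 0"
    define \<eta>' where "\<eta>' = min \<eta> (\<epsilon>I - 2 * norm (x - xbar))"
    have \<eta>': "\<eta>' > 0" "\<eta>' \<le> \<eta>" "\<eta>' \<le> \<epsilon>I - 2 * norm (x - xbar)" using \<eta> x unfolding \<eta>'_def by auto
    have Sne: "S \<noteq> {}" using xbSM by auto
    have "infdist x S < infdist x S + \<eta>'" using \<eta>' by simp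
    then obtain s where s: "s \<in> S" "dist x s < infdist x S + \<eta>'" using infdist_approx[OF Sne] by blast
    have "infdist x S \<le> dist x xbar" using infdist_le xbSM by blast
    then have "norm (s - xbar) < \<epsilon>I"
    proof -
      have "norm (s - xbar) \<le> dist x s + norm (x - xbar)"
        using norm_triangle_ineq[of "s - x" "x - xbar"] by (simp add: dist_norm norm_minus_commute)
      also have "\<dots> < infdist x S + \<eta>' + norm (x - xbar)" using s(2) by simp
      also have "\<dots> \<le> 2 * norm (x - xbar) + \<eta>'"
        using \<open>infdist x S \<le> dist x xbar\<close> by (simp add: dist_norm)
      also have "\<dots> \<le> \<epsilon>I" using \<eta>'(3) by simp
      finally show ?thesis .
    qed
    then have "s \<in> S \<inter> M" using SM s(1) by auto
    then have "infdist x (S \<inter> M) \<le> dist x s" by (rule infdist_le)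
    then show "infdist x (S \<inter> M) \<le> infdist x S + \<eta>" using s(2) \<eta>'(2) by simp
  qed
  have infd2: "infdist x S \<le> infdist x (S \<inter> M)" for x
    by (rule infdist_mono) (use xbSM in auto)
  show ?thesis
    unfolding S_def[symmetric]
  proof
    assume "\<exists>\<epsilon>>0. \<exists>\<mu>>0. \<forall>x\<in>ball xbar \<epsilon>. ereal (\<mu> * infdist x S) \<le> dist0 (limiting_subdiff f x)"
    then obtain \<epsilon>1 \<mu>1 where h: "\<epsilon>1 > 0" "\<mu>1 > 0"
      "\<forall>x\<in>ball xbar \<epsilon>1. ereal (\<mu>1 * infdist x S) \<le> dist0 (limiting_subdiff f x)" by blast
    define \<epsilon>2 where "\<epsilon>2 = min (min \<epsilon>1 (\<epsilon>I / 2)) (min r0 \<delta>R)"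
    have \<epsilon>2: "\<epsilon>2 > 0" "\<epsilon>2 \<le> \<epsilon>1" "\<epsilon>2 \<le> \<epsilon>I / 2" "\<epsilon>2 \<le> r0" "\<epsilon>2 \<le> \<delta>R"
      using h(1) ID(1) r0(1) RCp(1) unfolding \<epsilon>2_def by auto
    define \<mu>2 where "\<mu>2 = min \<mu>1 (\<eta>R / \<epsilon>2)"
    have \<mu>2: "\<mu>2 > 0" "\<mu>2 \<le> \<mu>1" "\<mu>2 \<le> \<eta>R / \<epsilon>2" using h(2) RCp(2) \<epsilon>2(1) unfolding \<mu>2_def by auto
    have "\<mu>2 * infdist x (S \<inter> M) \<le> norm (riem_grad f M x)" if x: "x \<in> ball xbar \<epsilon>2 \<inter> M" for x
    proof -
      define g where "g = riem_grad f M x"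
      have xM: "x \<in> M" and dx: "dist xbar x < \<epsilon>2" using x by auto
      have nx: "norm (x - xbar) < \<epsilon>2" using dx by (simp add: dist_norm norm_minus_commute)
      have xin: "x \<in> M \<inter> ball xbar r0" "x \<in> M \<inter> ball xbar \<delta>R" using xM dx \<epsilon>2 by auto
      note Fy = ps_facts[OF PS[OF xin(1)]]
      have id0: "0 \<le> infdist x (S \<inter> M)" by (rule infdist_nonneg)
      show ?thesis
      proof (cases "norm g < \<eta>R")
        case True
        obtain v0 where v0: "v0 \<in> limiting_subdiff f x" using Fy(3) by blast
        have "v0 - g \<in> normal_space M x"
          using frechet_normal[OF Fy(4) xM] v0 Fy(2) unfolding g_def by auto
        then have "v0 - g \<in> par (limiting_subdiff f x)" using Fy(5) by simp
        then have "- (v0 - g) \<in> par (limiting_subdiff f x)"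
          using subspace_neg[OF par_subspace[OF Fy(3)]] by blast
        then have "v0 + - (v0 - g) \<in> affine hull (limiting_subdiff f x)"
          by (rule aff_plus_par[rotated]) (use v0 in \<open>auto intro: hull_inc\<close>)
        then have "g \<in> affine hull (limiting_subdiff f x)" by simp
        then have gin: "g \<in> limiting_subdiff f x" using RCp(3) xin(2) True by blast
        have "infdist 0 (limiting_subdiff f x) \<le> dist 0 g" by (rule infdist_le[OF gin])
        then have "dist0 (limiting_subdiff f x) \<le> ereal (norm g)" unfolding dist0_def using gin by auto
        moreover have "x \<in> ball xbar \<epsilon>1" using dx \<epsilon>2 by auto
        ultimately have "ereal (\<mu>1 * infdist x S) \<le> ereal (norm g)" using h(3) by (meson order_trans)
        then have a: "\<mu>1 * infdist x S \<le> norm g" by simp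
        have "infdist x (S \<inter> M) \<le> infdist x S" using infd nx \<epsilon>2 by auto
        then have "\<mu>2 * infdist x (S \<inter> M) \<le> \<mu>1 * infdist x S"
          using \<mu>2 id0 h(2) by (intro mult_mono) auto
        then show ?thesis using a unfolding g_def by simp
      next
        case False
        have "infdist x (S \<inter> M) \<le> dist x xbar" using infdist_le xbSM by blast
        then have "infdist x (S \<inter> M) \<le> \<epsilon>2" using dx by (simp add: dist_commute)
        then have "\<mu>2 * infdist x (S \<inter> M) \<le> (\<eta>R / \<epsilon>2) * \<epsilon>2"
          using \<mu>2 id0 by (intro mult_mono) auto
        also have "\<dots> = \<eta>R" using \<epsilon>2(1) by simp
        finally show ?thesis using False unfolding g_def by simp
      qed
    qed
    then show "\<exists>\<epsilon>>0. \<exists>\<mu>>0. \<forall>x\<in>ball xbar \<epsilon> \<inter> M. \<mu> * infdist x (S \<inter> M) \<le> norm (riem_grad f M x)"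
      using \<epsilon>2(1) \<mu>2(1) by blast
  next
    assume "\<exists>\<epsilon>>0. \<exists>\<mu>>0. \<forall>x\<in>ball xbar \<epsilon> \<inter> M. \<mu> * infdist x (S \<inter> M) \<le> norm (riem_grad f M x)"
    then obtain \<epsilon>1 \<mu>1 where h: "\<epsilon>1 > 0" "\<mu>1 > 0"
      "\<forall>x\<in>ball xbar \<epsilon>1 \<inter> M. \<mu>1 * infdist x (S \<inter> M) \<le> norm (riem_grad f M x)" by blast
    define \<epsilon>2 where "\<epsilon>2 = min (min \<epsilon>1 \<epsilon>I) r0"
    have \<epsilon>2: "\<epsilon>2 > 0" "\<epsilon>2 \<le> \<epsilon>1" "\<epsilon>2 \<le> \<epsilon>I" "\<epsilon>2 \<le> r0"
      using h(1) ID(1) r0(1) unfolding \<epsilon>2_def by auto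
    define \<mu>2 where "\<mu>2 = min \<mu>1 (\<delta>I / \<epsilon>2)"
    have \<mu>2: "\<mu>2 > 0" "\<mu>2 \<le> \<mu>1" "\<mu>2 \<le> \<delta>I / \<epsilon>2" using h(2) ID(2) \<epsilon>2(1) unfolding \<mu>2_def by auto
    have "ereal (\<mu>2 * infdist x S) \<le> dist0 (limiting_subdiff f x)" if x: "x \<in> ball xbar \<epsilon>2" for x
    proof (cases "limiting_subdiff f x = {}")
      case True
      then show ?thesis unfolding dist0_def by simp
    next
      case Cne: False
      have id0: "0 \<le> infdist x S" by (rule infdist_nonneg)
      have dx: "dist xbar x < \<epsilon>2" using x by auto
      have "\<mu>2 * infdist x S \<le> infdist 0 (limiting_subdiff f x)"
      proof (cases "x \<in> M")
        case xM: True
        define g where "g = riem_grad f M x"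
        have xin: "x \<in> M \<inter> ball xbar r0" using xM dx \<epsilon>2 by auto
        note Fy = ps_facts[OF PS[OF xin]]
        have gT: "g \<in> tangent_space M x" using grad_char[OF Fy(4) xM] unfolding g_def by blast
        have lb: "norm g \<le> dist 0 c" if c: "c \<in> limiting_subdiff f x" for c
        proof -
          have "c - g \<in> normal_space M x"
            using frechet_normal[OF Fy(4) xM] c Fy(2) unfolding g_def by auto
          then have "inner (c - g) g = 0" using gT unfolding normal_space_def by blast
          then have cg: "inner c g = inner g g" by (simp add: inner_diff_left)
          have "(norm g)\<^sup>2 = inner c g" using cg by (simp add: power2_norm_eq_inner)
          also have "\<dots> \<le> norm c * norm g" by (rule Cauchy_Schwarz_ineq2[THEN abs_le_D1])
          finally have "norm g * norm g \<le> norm c * norm g" by (simp add: power2_eq_square)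
          then have "norm g \<le> norm c"
            by (cases "norm g = 0") (auto simp: mult_le_cancel_right)
          then show ?thesis by simp
        qed
        have "norm g \<le> infdist 0 (limiting_subdiff f x)" by (rule infdist_lb[OF Cne lb])
        moreover have "\<mu>1 * infdist x (S \<inter> M) \<le> norm g"
          using h(3) xM dx \<epsilon>2 unfolding g_def by auto
        moreover have "\<mu>2 * infdist x S \<le> \<mu>1 * infdist x (S \<inter> M)"
          using \<mu>2 id0 h(2) infd2[of x] by (intro mult_mono) auto
        ultimately show ?thesis by linarith
      next
        case xM: False
        have lb: "\<delta>I \<le> dist 0 c" if c: "c \<in> limiting_subdiff f x" for c
        proof (rule ccontr)
          assume "\<not> \<delta>I \<le> dist 0 c"
          then have "norm c < \<delta>I" by simp
          moreover have "x \<in> ball xbar \<epsilon>I" using dx \<epsilon>2 by auto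
          ultimately have "x \<in> M" using ID(3) c by blast
          then show False using xM by simp
        qed
        have "\<delta>I \<le> infdist 0 (limiting_subdiff f x)" by (rule infdist_lb[OF Cne lb])
        moreover have "infdist x S \<le> \<epsilon>2"
        proof -
          have "infdist x S \<le> dist x xbar" using infdist_le xbSM by blast
          then show ?thesis using dx by (simp add: dist_commute)
        qed
        then have "\<mu>2 * infdist x S \<le> (\<delta>I / \<epsilon>2) * \<epsilon>2"
          using \<mu>2 id0 by (intro mult_mono) auto
        moreover have "(\<delta>I / \<epsilon>2) * \<epsilon>2 = \<delta>I" using \<epsilon>2(1) by simp
        ultimately show ?thesis by linarith
      qed
      then show ?thesis unfolding dist0_def using Cne by simp
    qed
    then show "\<exists>\<epsilon>>0. \<exists>\<mu>>0. \<forall>x\<in>ball xbar \<epsilon>. ereal (\<mu> * infdist x S) \<le> dist0 (limiting_subdiff f x)"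
      using \<epsilon>2(1) \<mu>2(1) by blast
  qed
qed

end
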